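(* Let $n\ge1$, $\beta\in\mathbb C\setminus\{0\}$, $1\le m\le n$ and $a_1,\dots,a_m,b_1,\dots,b_m\in\{1,\dots,n\}$. In $OY_\beta(\mathfrak{gl}_n)$, for all $i,j\in\{1,\dots,m\}$, $$[\tilde T_{a_ib_j}(u),\tilde t^{a_1\dots a_m}_{b_1\dots b_m}(v)]=0.$$
   Context: $OY_\beta(\mathfrak{gl}_n)$ is the unital associative $\mathbb C$-algebra with generators $\tilde t^{(r)}_{ij}$ ($r\ge1$) and relations $\left(u+\frac\beta u-v-\frac\beta v\right)[\tilde T_{ij}(u),\tilde T_{kl}(v)]=\tilde T_{kj}(u)\tilde T_{il}(v)-\tilde T_{kj}(v)\tilde T_{il}(u)$, $\tilde T_{ij}(u)=\delta_{ij}+\sum_{r\ge1}\tilde t^{(r)}_{ij}u^{-r}$. For $c\in\mathbb C$, $\phi_c(u)$ is the unique series in $u+\mathbb C[[u^{-1}]]$ with $\phi_c(u)+\beta/\phi_c(u)=u+\beta/u+c$, and $\tilde T_{ij}(\phi(u)):=\sum_r\tilde t^{(r)}_{ij}\phi(u)^{-r}$ expanded in $u^{-1}$. $\tilde T_p(v)=\sum_{i,j}1^{\otimes(p-1)}\otimes E_{ij}\otimes1^{\otimes(m-p)}\otimes\tilde T_{ij}(v)$, and $A_m$ is the antisymmetrizer on $(\mathbb C^n)^{\otimes m}$. The quantum minors $\tilde t^{a_1\dots a_m}_{b_1\dots b_m}(u)$ are defined by $A_m\tilde T_1(u)\tilde T_2(\phi_{-1}(u))\cdots\tilde T_m(\phi_{-(m-1)}(u))=\sum_{a_i,b_j}E_{a_1b_1}\otimes\cdots\otimes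 E_{a_mb_m}\otimes\tilde t^{a_1\dots a_m}_{b_1\dots b_m}(u)$. *)

theory Defs
  imports "HOL-Computational_Algebra.Formal_Laurent_Series" "HOL-Combinatorics.Permutations"
    "HOL-Library.FuncSet"
begin

(* A unital associative C-algebra: a ring_1 'A with a central unital ring
   homomorphism sc : C -> 'A (scalar c acts as multiplication by sc c). *)
definition is_calg :: "(complex \<Rightarrow> 'A::ring_1) \<Rightarrow> bool" where
  "is_calg sc \<longleftrightarrow> sc 1 = 1 \<and> (\<forall>x y. sc (x + y) = sc x + sc y)
     \<and> (\<forall>x y. sc (x * y) = sc x * sc y) \<and> (\<forall>c z. sc c * z = z * sc c)"

definition comm :: "'A::ring \<Rightarrow> 'A \<Rightarrow> 'A" where
  "comm x y = x * y - y * x"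

definition tt :: "(nat \<Rightarrow> nat \<Rightarrow> nat \<Rightarrow> 'A::ring_1) \<Rightarrow> nat \<Rightarrow> nat \<Rightarrow> nat \<Rightarrow> 'A" where
  "tt t r i j = (if r = 0 then (if i = j then 1 else 0) else t r i j)"

(* The defining relations of OY_beta(gl_n), written coefficientwise:
   the coefficient of u^{-r} v^{-s} (r,s >= 0) of
   (u + beta/u - v - beta/v)[T_ij(u),T_kl(v)] = T_kj(u)T_il(v) - T_kj(v)T_il(u). *)
definition OY_rel :: "(complex \<Rightarrow> 'A::ring_1) \<Rightarrow> complex \<Rightarrow> nat \<Rightarrow> (nat \<Rightarrow> nat \<Rightarrow> nat \<Rightarrow> 'A) \<Rightarrow> bool" where
  "OY_rel sc \<beta> n t \<longleftrightarrow>
    (\<forall>i\<in>{1..n}. \<forall>j\<in>{1..n}. \<forall>k\<in>{1..n}. \<forall>l\<in>{1..n}. \<forall>r s :: nat.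
       comm (tt t (r + 1) i j) (tt t s k l)
       + (if r \<ge> 1 then sc \<beta> * comm (tt t (r - 1) i j) (tt t s k l) else 0)
       - comm (tt t r i j) (tt t (s + 1) k l)
       - (if s \<ge> 1 then sc \<beta> * comm (tt t r i j) (tt t (s - 1) k l) else 0)
       = tt t r k j * tt t s i l - tt t s k j * tt t r i l)"

(* phi_c(u), as a Laurent series in the variable X = u^{-1}:
   the unique phi in u + C[[u^{-1}]] with phi + beta/phi = u + beta/u + c. *)
definition phi_ser :: "complex \<Rightarrow> complex \<Rightarrow> complex fls" where
  "phi_ser \<beta> c = (THE \<phi>. (\<exists>g :: complex fps. \<phi> = fls_X_inv + fps_to_fls g)
      \<and> \<phi> + fls_const \<beta> / \<phi> = fls_X_inv + fls_const \<beta> * fls_X + fls_const c)"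

(* Coefficient of u^{-N} in T_ij(phi_c(u)) = sum_r t^{(r)}_ij phi_c(u)^{-r}
   (only r <= N contribute, since phi_c(u)^{-r} lies in u^{-r} C[[u^{-1}]]). *)
definition Tphi :: "(complex \<Rightarrow> 'A::ring_1) \<Rightarrow> (nat \<Rightarrow> nat \<Rightarrow> nat \<Rightarrow> 'A) \<Rightarrow> complex \<Rightarrow> complex
    \<Rightarrow> nat \<Rightarrow> nat \<Rightarrow> nat \<Rightarrow> 'A" where
  "Tphi sc t \<beta> c N i j = (\<Sum>r\<in>{0..N}. sc (fls_nth (inverse (phi_ser \<beta> c) ^ r) (int N)) * tt t r i j)"

(* Coefficient of v^{-N} in the quantum minor t^{a_1..a_m}_{b_1..b_m}(v), i.e. the
   (a,b) matrix entry of A_m T_1(v) T_2(phi_{-1}(v)) ... T_m(phi_{-(m-1)}(v)),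
   with A_m = (1/m!) sum_sigma sgn(sigma) P_sigma the antisymmetrizer. *)
definition qminor :: "(complex \<Rightarrow> 'A::ring_1) \<Rightarrow> (nat \<Rightarrow> nat \<Rightarrow> nat \<Rightarrow> 'A) \<Rightarrow> complex
    \<Rightarrow> nat \<Rightarrow> (nat \<Rightarrow> nat) \<Rightarrow> (nat \<Rightarrow> nat) \<Rightarrow> nat \<Rightarrow> 'A" where
  "qminor sc t \<beta> m a b N =
     sc (inverse (of_nat (fact m))) *
     (\<Sum>\<sigma> | \<sigma> permutes {1..m}. of_int (sign \<sigma>) *
       (\<Sum>Ns \<in> {Ns \<in> {1..m} \<rightarrow>\<^sub>E {0..N}. sum Ns {1..m} = N}.
          prod_list (map (\<lambda>k. Tphi sc t \<beta> (- of_nat (k - 1)) (Ns k) (a (\<sigma> k)) (b k)) [1..<m+1])))"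

end

theory Submission
  imports Defs
begin

definition Alt :: "nat \<Rightarrow> nat \<Rightarrow> ((nat \<Rightarrow> nat) \<Rightarrow> 'S::ring_1) \<Rightarrow> (nat \<Rightarrow> nat) \<Rightarrow> 'S" where
  "Alt s m F \<alpha> = (\<Sum>\<sigma> | \<sigma> permutes {s..m}. of_int (sign \<sigma>) * F (\<alpha> \<circ> \<sigma>))"

lemma sign_perm_compose:
  assumes "\<sigma> permutes {s..m}" "\<tau> permutes {s..(m::nat)}"
  shows "sign (\<sigma> \<circ> \<tau>) = sign \<sigma> * sign \<tau>"
  using assms by (intro sign_compose) (auto intro: permutes_imp_permutation)

lemma Alt_perm:
  assumes "\<tau> permutes {s..m}"
  shows "Alt s m F (\<alpha> \<circ> \<tau>) = of_int (sign \<tau>) * Alt s m F \<alpha>"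
proof -
  have it: "inv \<tau> permutes {s..m}" using assms by (rule permutes_inv)
  have "Alt s m F (\<alpha> \<circ> \<tau>) = (\<Sum>\<sigma> | \<sigma> permutes {s..m}. of_int (sign (inv \<tau> \<circ> \<sigma>)) * F (\<alpha> \<circ> \<tau> \<circ> (inv \<tau> \<circ> \<sigma>)))"
    unfolding Alt_def by (rule setum_permutations_compose_left[OF it])
  also have "\<dots> = (\<Sum>\<sigma> | \<sigma> permutes {s..m}. of_int (sign \<tau>) * (of_int (sign \<sigma>) * F (\<alpha> \<circ> \<sigma>)))"
  proof (rule sum.cong[OF refl])
    fix \<sigma> assume "\<sigma> \<in> {\<sigma>. \<sigma> permutes {s..m}}"
    hence s: "\<sigma> permutes {s..m}" by simp
    have "sign (inv \<tau> \<circ> \<sigma>) = sign \<tau> * sign \<sigma>"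
      using sign_perm_compose[OF it s] sign_inverse[OF permutes_imp_permutation[OF _ assms]] by simp
    moreover have "\<alpha> \<circ> \<tau> \<circ> (inv \<tau> \<circ> \<sigma>) = \<alpha> \<circ> \<sigma>"
      by (simp add: fun_eq_iff permutes_inverses(1)[OF assms])
    ultimately show "of_int (sign (inv \<tau> \<circ> \<sigma>)) * F (\<alpha> \<circ> \<tau> \<circ> (inv \<tau> \<circ> \<sigma>)) =
        of_int (sign \<tau>) * (of_int (sign \<sigma>) * F (\<alpha> \<circ> \<sigma>))" by (simp add: mult.assoc)
  qed
  also have "\<dots> = of_int (sign \<tau>) * Alt s m F \<alpha>" unfolding Alt_def by (simp add: sum_distrib_left)
  finally show ?thesis .
qed

lemma Alt_transp:
  assumes "i \<in> {s..m}" "j \<in> {s..m}" "i \<noteq> j"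
  shows "Alt s m F (\<alpha> \<circ> Transposition.transpose i j) = - Alt s m F \<alpha>"
  using Alt_perm[OF permutes_swap_id[OF assms(1,2)]] assms(3) by (simp add: sign_swap_id)

lemma Alt_right:
  assumes "i \<in> {s..m}" "j \<in> {s..m}" "i \<noteq> j"
  shows "Alt s m F \<alpha> + Alt s m F \<alpha> =
     (\<Sum>\<sigma> | \<sigma> permutes {s..m}. of_int (sign \<sigma>) * (F (\<alpha> \<circ> \<sigma>) - F (\<alpha> \<circ> \<sigma> \<circ> Transposition.transpose i j)))"
proof -
  let ?t = "Transposition.transpose i j"
  have tp: "?t permutes {s..m}" using assms by (intro permutes_swap_id)
  have "Alt s m F \<alpha> = (\<Sum>\<sigma> | \<sigma> permutes {s..m}. of_int (sign (\<sigma> \<circ> ?t)) * F (\<alpha> \<circ> (\<sigma> \<circ> ?t)))"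
    unfolding Alt_def by (rule sum_permutations_compose_right[OF tp])
  also have "\<dots> = (\<Sum>\<sigma> | \<sigma> permutes {s..m}. - (of_int (sign \<sigma>) * F (\<alpha> \<circ> \<sigma> \<circ> ?t)))"
  proof (rule sum.cong[OF refl])
    fix \<sigma> assume "\<sigma> \<in> {\<sigma>. \<sigma> permutes {s..m}}"
    hence s: "\<sigma> permutes {s..m}" by simp
    show "of_int (sign (\<sigma> \<circ> ?t)) * F (\<alpha> \<circ> (\<sigma> \<circ> ?t)) = - (of_int (sign \<sigma>) * F (\<alpha> \<circ> \<sigma> \<circ> ?t))"
      using sign_perm_compose[OF s tp] assms(3) by (simp add: sign_swap_id o_assoc)
  qed
  finally have "Alt s m F \<alpha> = - (\<Sum>\<sigma> | \<sigma> permutes {s..m}. of_int (sign \<sigma>) * F (\<alpha> \<circ> \<sigma> \<circ> ?t))"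
    by (simp add: sum_negf)
  hence "Alt s m F \<alpha> + Alt s m F \<alpha> = Alt s m F \<alpha> - (\<Sum>\<sigma> | \<sigma> permutes {s..m}. of_int (sign \<sigma>) * F (\<alpha> \<circ> \<sigma> \<circ> ?t))"
    by simp
  also have "\<dots> = (\<Sum>\<sigma> | \<sigma> permutes {s..m}. of_int (sign \<sigma>) * (F (\<alpha> \<circ> \<sigma>) - F (\<alpha> \<circ> \<sigma> \<circ> ?t)))"
    unfolding Alt_def by (simp add: sum_subtractf right_diff_distrib)
  finally show ?thesis .
qed

locale core =
  fixes P :: "nat \<Rightarrow> nat \<Rightarrow> 'S::ring_1" and Q :: "nat \<Rightarrow> nat \<Rightarrow> nat \<Rightarrow> 'S"
    and sm :: "'K::comm_ring_1 \<Rightarrow> 'S \<Rightarrow> 'S"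
    and D :: "int \<Rightarrow> 'K" and e :: 'K
  assumes sm_mult_left: "sm c x * y = sm c (x * y)"
    and sm_mult_right: "x * sm c y = sm c (x * y)"
    and sm_sm: "sm c (sm c' x) = sm (c * c') x"
    and sm_add: "sm c (x + y) = sm c x + sm c y"
    and sm_add_left: "sm (c + c') x = sm c x + sm c' x"
    and D_succ: "D (z + 1) = D z + e"
    and relA: "sm (D (int r)) (P i j * Q r k l - Q r k l * P i j) = sm e (P k j * Q r i l - Q r k j * P i l)"
    and relB: "Q r i j * Q (Suc r) k l - Q (Suc r) k l * Q r i j = Q r k j * Q (Suc r) i l - Q (Suc r) k j * Q r i l"
    and D_cancel: "sm (D z) x = 0 \<Longrightarrow> x = 0"
    and nat_cancel: "n > 0 \<Longrightarrow> of_nat n * x = 0 \<Longrightarrow> x = 0"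
begin

lemma sm_zero[simp]: "sm c 0 = 0"
  using sm_add[of c 0 0] by simp

lemma sm_minus: "sm c (- x) = - sm c x"
  using sm_add[of c x "- x"] by (simp add: eq_neg_iff_add_eq_0 add.commute)

lemma sm_diff: "sm c (x - y) = sm c x - sm c y"
  using sm_add[of c x "- y"] sm_minus[of c y] by simp

lemma sm_zero_left[simp]: "sm 0 x = 0"
  using sm_add_left[of 0 0 x] by simp

lemma sm_minus_left: "sm (- c) x = - sm c x"
  using sm_add_left[of c "- c" x] by (simp add: eq_neg_iff_add_eq_0 add.commute)

lemma sm_diff_left: "sm (c - c') x = sm c x - sm c' x"
  using sm_add_left[of c "- c'" x] sm_minus_left[of c' x] by simp

lemma sm_sum: "sm c (sum f A) = (\<Sum>j\<in>A. sm c (f j))"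
  by (induction A rule: infinite_finite_induct) (simp_all add: sm_add)

lemmas sm_simps = sm_mult_left sm_mult_right sm_sm sm_add sm_add_left sm_minus sm_diff sm_minus_left sm_diff_left sm_sum

lemma two_cancel: "(x::'S) + x = 0 \<Longrightarrow> x = 0"
  using nat_cancel[of 2 x] by (simp add: mult_2)

definition Pi :: "nat \<Rightarrow> nat \<Rightarrow> (nat \<Rightarrow> nat) \<Rightarrow> (nat \<Rightarrow> nat) \<Rightarrow> 'S" where
  "Pi s m b \<beta> = prod_list (map (\<lambda>k. Q (k - 1) (\<beta> k) (b k)) [s..<Suc m])"

definition L :: "nat \<Rightarrow> nat \<Rightarrow> (nat \<Rightarrow> nat) \<Rightarrow> (nat \<Rightarrow> nat) \<Rightarrow> 'S" where
  "L s m \<alpha> b = Alt s m (Pi s m b) \<alpha>"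

lemma L_cong:
  assumes "\<And>k. k \<in> {s..m} \<Longrightarrow> \<alpha> k = \<alpha>' k" "\<And>k. k \<in> {s..m} \<Longrightarrow> b k = b' k"
  shows "L s m \<alpha> b = L s m \<alpha>' b'"
  unfolding L_def Alt_def
proof (rule sum.cong[OF refl])
  fix \<sigma> assume "\<sigma> \<in> {\<sigma>. \<sigma> permutes {s..m}}"
  hence s: "\<sigma> permutes {s..m}" by simp
  have "Pi s m b (\<alpha> \<circ> \<sigma>) = Pi s m b' (\<alpha>' \<circ> \<sigma>)"
    unfolding Pi_def
  proof (rule arg_cong[where f = prod_list], rule map_cong[OF refl])
    fix k assume "k \<in> set [s..<Suc m]"
    hence k: "k \<in> {s..m}" by auto
    hence "\<sigma> k \<in> {s..m}" using permutes_in_image[OF s] by simp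
    thus "Q (k - 1) ((\<alpha> \<circ> \<sigma>) k) (b k) = Q (k - 1) ((\<alpha>' \<circ> \<sigma>) k) (b' k)"
      using assms k by simp
  qed
  thus "of_int (sign \<sigma>) * Pi s m b (\<alpha> \<circ> \<sigma>) = of_int (sign \<sigma>) * Pi s m b' (\<alpha>' \<circ> \<sigma>)" by simp
qed

lemma L_row_rep:
  assumes "i \<in> {s..m}" "j \<in> {s..m}" "i \<noteq> j" "\<alpha> i = \<alpha> j"
  shows "L s m \<alpha> b = 0"
proof -
  have h: "\<alpha> \<circ> Transposition.transpose i j = \<alpha>"
    using assms(4) by (auto simp: fun_eq_iff transpose_def)
  have "Alt s m (Pi s m b) (\<alpha> \<circ> Transposition.transpose i j) = - Alt s m (Pi s m b) \<alpha>"
    by (rule Alt_transp[OF assms(1-3)])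
  hence "L s m \<alpha> b = - L s m \<alpha> b" unfolding L_def h .
  hence "L s m \<alpha> b + L s m \<alpha> b = 0" by (metis add.right_inverse)
  thus ?thesis by (rule two_cancel)
qed

lemma upt_split3:
  assumes "s \<le> r" "Suc r \<le> m"
  shows "[s..<Suc m] = [s..<r] @ r # Suc r # [Suc (Suc r)..<Suc m]"
proof -
  have "[s..<Suc m] = [s..<r] @ [r..<Suc m]" using upt_add_eq_append[of s r "Suc m - r"] assms by simp
  also have "[r..<Suc m] = r # Suc r # [Suc (Suc r)..<Suc m]" using assms by (simp add: upt_conv_Cons)
  finally show ?thesis .
qed

lemma M2_antisym:
  assumes "1 \<le> r"
  shows "Q (r-1) i l * Q r k j - Q (r-1) k l * Q r i j = - (Q (r-1) i j * Q r k l - Q (r-1) k j * Q r i l)"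
proof -
  have r: "Suc (r - 1) = r" using assms by simp
  have 1: "Q (r-1) i j * Q r k l - Q r k l * Q (r-1) i j = Q (r-1) k j * Q r i l - Q r k j * Q (r-1) i l"
    using relB[of "r-1" i j k l] unfolding r .
  have 2: "Q (r-1) i l * Q r k j - Q r k j * Q (r-1) i l = Q (r-1) k l * Q r i j - Q r k l * Q (r-1) i j"
    using relB[of "r-1" i l k j] unfolding r .
  let ?A = "Q (r-1) i j * Q r k l" and ?B = "Q r k l * Q (r-1) i j" and ?C = "Q (r-1) k j * Q r i l"
  let ?D = "Q r k j * Q (r-1) i l" and ?E = "Q (r-1) i l * Q r k j" and ?F = "Q (r-1) k l * Q r i j"
  have "?E - ?F + (?A - ?C) = (?E - ?D - (?F - ?B)) + (?A - ?B - (?C - ?D))" by (simp add: algebra_simps)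
  also have "\<dots> = 0" using 1 2 by simp
  finally show ?thesis unfolding eq_neg_iff_add_eq_0 .
qed

lemma L_col_adj:
  assumes "1 \<le> s" "s \<le> r" "Suc r \<le> m"
  shows "L s m \<alpha> (b \<circ> Transposition.transpose r (Suc r)) = - L s m \<alpha> b"
proof -
  let ?t = "Transposition.transpose r (Suc r)"
  define A where "A b \<beta> = prod_list (map (\<lambda>k. Q (k - 1) (\<beta> k) (b k)) [s..<r])" for b \<beta>
  define C where "C b \<beta> = prod_list (map (\<lambda>k. Q (k - 1) (\<beta> k) (b k)) [Suc (Suc r)..<Suc m])" for b \<beta>
  define M2 where "M2 i k j l = Q (r-1) i j * Q r k l - Q (r-1) k j * Q r i l" for i k j l
  have r1: "1 \<le> r" using assms by simp
  have Pi_dec: "Pi s m b \<beta> = A b \<beta> * (Q (r-1) (\<beta> r) (b r) * Q r (\<beta> (Suc r)) (b (Suc r))) * C b \<beta>" for b \<beta>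
    unfolding Pi_def A_def C_def upt_split3[OF assms(2,3)] by (simp add: mult.assoc)
  have At: "A b' \<beta>' = A b \<beta>" if "\<And>k. k < r \<Longrightarrow> b' k = b k" "\<And>k. k < r \<Longrightarrow> \<beta>' k = \<beta> k" for b b' \<beta> \<beta>'
    unfolding A_def by (rule arg_cong[where f = prod_list], rule map_cong[OF refl]) (auto simp: that)
  have Ct: "C b' \<beta>' = C b \<beta>" if "\<And>k. k > Suc r \<Longrightarrow> b' k = b k" "\<And>k. k > Suc r \<Longrightarrow> \<beta>' k = \<beta> k" for b b' \<beta> \<beta>'
    unfolding C_def by (rule arg_cong[where f = prod_list], rule map_cong[OF refl]) (auto simp: that)
  have At0: "A b (\<beta> \<circ> ?t) = A b \<beta>" for b \<beta> by (rule At) (auto simp: transpose_def)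
  have Ct0: "C b (\<beta> \<circ> ?t) = C b \<beta>" for b \<beta> by (rule Ct) (auto simp: transpose_def)
  have At1: "A (b \<circ> ?t) \<beta> = A b \<beta>" for \<beta> by (rule At) (auto simp: transpose_def)
  have Ct1: "C (b \<circ> ?t) \<beta> = C b \<beta>" for \<beta> by (rule Ct) (auto simp: transpose_def)
  have diff_b: "Pi s m b \<beta> - Pi s m b (\<beta> \<circ> ?t) = A b \<beta> * M2 (\<beta> r) (\<beta> (Suc r)) (b r) (b (Suc r)) * C b \<beta>" for \<beta>
    unfolding Pi_dec At0 Ct0 M2_def by (simp add: algebra_simps)
  have diff_bt: "Pi s m (b \<circ> ?t) \<beta> - Pi s m (b \<circ> ?t) (\<beta> \<circ> ?t) = - (A b \<beta> * M2 (\<beta> r) (\<beta> (Suc r)) (b r) (b (Suc r)) * C b \<beta>)" for \<beta>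
  proof -
    have "Pi s m (b \<circ> ?t) \<beta> - Pi s m (b \<circ> ?t) (\<beta> \<circ> ?t) = A b \<beta> * (Q (r-1) (\<beta> r) (b (Suc r)) * Q r (\<beta> (Suc r)) (b r) - Q (r-1) (\<beta> (Suc r)) (b (Suc r)) * Q r (\<beta> r) (b r)) * C b \<beta>"
      unfolding Pi_dec At0 Ct0 At1 Ct1 by (simp add: algebra_simps)
    also have "\<dots> = A b \<beta> * (- M2 (\<beta> r) (\<beta> (Suc r)) (b r) (b (Suc r))) * C b \<beta>"
      unfolding M2_def using M2_antisym[OF r1] by simp
    finally show ?thesis by simp
  qed
  have rr: "r \<in> {s..m}" "Suc r \<in> {s..m}" "r \<noteq> Suc r" using assms by auto
  have "L s m \<alpha> (b \<circ> ?t) + L s m \<alpha> (b \<circ> ?t) = - (L s m \<alpha> b + L s m \<alpha> b)"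
    unfolding L_def Alt_right[OF rr] diff_b diff_bt by (simp add: sum_negf)
  hence "(L s m \<alpha> (b \<circ> ?t) + L s m \<alpha> b) + (L s m \<alpha> (b \<circ> ?t) + L s m \<alpha> b) = 0"
    by (simp add: algebra_simps)
  hence "L s m \<alpha> (b \<circ> ?t) + L s m \<alpha> b = 0" by (rule two_cancel)
  thus ?thesis by (simp add: eq_neg_iff_add_eq_0)
qed

lemma L_col_transp:
  assumes "1 \<le> s" "s \<le> i" "i < j" "j \<le> m"
  shows "L s m \<alpha> (b \<circ> Transposition.transpose i j) = - L s m \<alpha> b"
  using assms(2-4)
proof (induction "j - i" arbitrary: i b)
  case 0 thus ?case by simp
next
  case (Suc d)
  show ?case
  proof (cases "j = Suc i")
    case True thus ?thesis using L_col_adj[OF assms(1), of i] Suc.prems by simp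
  next
    case False
    let ?t1 = "Transposition.transpose i (Suc i)" and ?t2 = "Transposition.transpose (Suc i) j"
    have eq: "b \<circ> Transposition.transpose i j = ((b \<circ> ?t1) \<circ> ?t2) \<circ> ?t1"
      using False Suc.prems by (auto simp: fun_eq_iff transpose_def)
    have h1: "L s m \<alpha> (((b \<circ> ?t1) \<circ> ?t2) \<circ> ?t1) = - L s m \<alpha> ((b \<circ> ?t1) \<circ> ?t2)"
      using L_col_adj[OF assms(1), of i] Suc.prems False by simp
    have h2: "L s m \<alpha> ((b \<circ> ?t1) \<circ> ?t2) = - L s m \<alpha> (b \<circ> ?t1)"
      using Suc.hyps(1)[of "Suc i" "b \<circ> ?t1"] Suc.hyps(2) Suc.prems False by simp
    have h3: "L s m \<alpha> (b \<circ> ?t1) = - L s m \<alpha> b"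
      using L_col_adj[OF assms(1), of i] Suc.prems False by simp
    show ?thesis unfolding eq h1 h2 h3 by simp
  qed
qed

lemma L_col_rep:
  assumes "1 \<le> s" "i \<in> {s..m}" "j \<in> {s..m}" "i \<noteq> j" "b i = b j"
  shows "L s m \<alpha> b = 0"
proof -
  have h: "b \<circ> Transposition.transpose (min i j) (max i j) = b"
    using assms(5) by (auto simp: fun_eq_iff transpose_def min_def max_def)
  have "L s m \<alpha> (b \<circ> Transposition.transpose (min i j) (max i j)) = - L s m \<alpha> b"
    using assms by (intro L_col_transp) (auto simp: min_def max_def)
  hence "L s m \<alpha> b = - L s m \<alpha> b" unfolding h .
  hence "L s m \<alpha> b + L s m \<alpha> b = 0" by (metis add.right_inverse)
  thus ?thesis by (rule two_cancel)
qed

lemma Pi_cons: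
  assumes "s \<le> m"
  shows "Pi s m b \<gamma> = Q (s - 1) (\<gamma> s) (b s) * Pi (Suc s) m b \<gamma>"
  unfolding Pi_def using assms by (simp add: upt_conv_Cons del: upt_Suc)

lemma L_dec:
  assumes "s \<le> m"
  shows "of_nat (fact (m - s)) * L s m \<alpha> b = Alt s m (\<lambda>\<beta>. Q (s - 1) (\<beta> s) (b s) * L (Suc s) m \<beta> b) \<alpha>"
proof -
  let ?S = "{\<sigma>. \<sigma> permutes {s..m}}" and ?R = "{\<rho>. \<rho> permutes {Suc s..m}}"
  have "Alt s m (\<lambda>\<beta>. Q (s - 1) (\<beta> s) (b s) * L (Suc s) m \<beta> b) \<alpha> =
      (\<Sum>\<sigma>\<in>?S. \<Sum>\<rho>\<in>?R. of_int (sign (\<sigma> \<circ> \<rho>)) * Pi s m b (\<alpha> \<circ> (\<sigma> \<circ> \<rho>)))"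
    unfolding Alt_def L_def
  proof (rule sum.cong[OF refl])
    fix \<sigma> assume "\<sigma> \<in> ?S"
    hence s: "\<sigma> permutes {s..m}" by simp
    show "of_int (sign \<sigma>) * (Q (s - 1) ((\<alpha> \<circ> \<sigma>) s) (b s) * (\<Sum>\<rho>\<in>?R. of_int (sign \<rho>) * Pi (Suc s) m b (\<alpha> \<circ> \<sigma> \<circ> \<rho>))) =
        (\<Sum>\<rho>\<in>?R. of_int (sign (\<sigma> \<circ> \<rho>)) * Pi s m b (\<alpha> \<circ> (\<sigma> \<circ> \<rho>)))"
      unfolding sum_distrib_left
    proof (rule sum.cong[OF refl])
      fix \<rho> assume "\<rho> \<in> ?R"
      hence r: "\<rho> permutes {Suc s..m}" by simp
      hence r': "\<rho> permutes {s..m}" by (rule permutes_subset) auto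
      have rs: "\<rho> s = s" using r by (intro permutes_not_in) auto
      have "Pi s m b (\<alpha> \<circ> (\<sigma> \<circ> \<rho>)) = Q (s - 1) ((\<alpha> \<circ> \<sigma>) s) (b s) * Pi (Suc s) m b (\<alpha> \<circ> \<sigma> \<circ> \<rho>)"
        using Pi_cons[OF assms] rs by (simp add: o_assoc)
      moreover have "sign (\<sigma> \<circ> \<rho>) = sign \<sigma> * sign \<rho>" by (rule sign_perm_compose[OF s r'])
      ultimately show "of_int (sign \<sigma>) * (Q (s - 1) ((\<alpha> \<circ> \<sigma>) s) (b s) * (of_int (sign \<rho>) * Pi (Suc s) m b (\<alpha> \<circ> \<sigma> \<circ> \<rho>))) =
          of_int (sign (\<sigma> \<circ> \<rho>)) * Pi s m b (\<alpha> \<circ> (\<sigma> \<circ> \<rho>))"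
        by (simp add: mult.assoc mult_of_int_commute[of "sign \<rho>"])
    qed
  qed
  also have "\<dots> = (\<Sum>\<rho>\<in>?R. \<Sum>\<sigma>\<in>?S. of_int (sign (\<sigma> \<circ> \<rho>)) * Pi s m b (\<alpha> \<circ> (\<sigma> \<circ> \<rho>)))"
    by (rule sum.swap)
  also have "\<dots> = (\<Sum>\<rho>\<in>?R. L s m \<alpha> b)"
  proof (rule sum.cong[OF refl])
    fix \<rho> assume "\<rho> \<in> ?R"
    hence r: "\<rho> permutes {Suc s..m}" by simp
    hence r': "\<rho> permutes {s..m}" by (rule permutes_subset) auto
    show "(\<Sum>\<sigma>\<in>?S. of_int (sign (\<sigma> \<circ> \<rho>)) * Pi s m b (\<alpha> \<circ> (\<sigma> \<circ> \<rho>))) = L s m \<alpha> b"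
      unfolding L_def Alt_def using sum_permutations_compose_right[OF r', of "\<lambda>\<sigma>. of_int (sign \<sigma>) * Pi s m b (\<alpha> \<circ> \<sigma>)"]
      by simp
  qed
  also have "\<dots> = of_nat (card ?R) * L s m \<alpha> b" by simp
  also have "card ?R = fact (m - s)" by (rule card_permutations) auto
  finally show ?thesis by simp
qed

end

lemma Alt_diff: "Alt s m (\<lambda>\<beta>. F \<beta> - G \<beta>) \<alpha> = Alt s m F \<alpha> - Alt s m G \<alpha>"
  unfolding Alt_def by (simp add: right_diff_distrib sum_subtractf)

lemma Alt_add: "Alt s m (\<lambda>\<beta>. F \<beta> + G \<beta>) \<alpha> = Alt s m F \<alpha> + Alt s m G \<alpha>"
  unfolding Alt_def by (simp add: distrib_left sum.distrib)

lemma Alt_sum: "Alt s m (\<lambda>\<beta>. \<Sum>j\<in>A. F j \<beta>) \<alpha> = (\<Sum>j\<in>A. Alt s m (F j) \<alpha>)"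
  unfolding Alt_def by (simp add: sum_distrib_left sum.swap[of _ A])

lemma of_int_left_commute: "of_int x * (c * y) = c * (of_int x * (y::'a::ring_1))"
  by (metis mult.assoc mult_of_int_commute)

lemma Alt_mult_left: "Alt s m (\<lambda>\<beta>. c * F \<beta>) \<alpha> = c * Alt s m F \<alpha>"
  unfolding Alt_def by (simp add: sum_distrib_left of_int_left_commute)

lemma Alt_mult_right: "Alt s m (\<lambda>\<beta>. F \<beta> * c) \<alpha> = Alt s m F \<alpha> * c"
  unfolding Alt_def by (simp add: sum_distrib_right mult.assoc)

lemma Alt_upd:
  "Alt s m (\<lambda>\<beta>. \<Sum>i\<in>{s..m}. c (\<beta> i) * F (\<beta>(i:=k))) \<alpha> = (\<Sum>i\<in>{s..m}. c (\<alpha> i) * Alt s m F (\<alpha>(i:=k)))"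
proof -
  have "Alt s m (\<lambda>\<beta>. \<Sum>i\<in>{s..m}. c (\<beta> i) * F (\<beta>(i:=k))) \<alpha> =
     (\<Sum>\<sigma> | \<sigma> permutes {s..m}. of_int (sign \<sigma>) * (\<Sum>i\<in>{s..m}. c (\<alpha> i) * F ((\<alpha>(i:=k)) \<circ> \<sigma>)))"
    unfolding Alt_def
  proof (rule sum.cong[OF refl])
    fix \<sigma> assume "\<sigma> \<in> {\<sigma>. \<sigma> permutes {s..m}}"
    hence sp: "\<sigma> permutes {s..m}" by simp
    have "(\<Sum>i\<in>{s..m}. c ((\<alpha> \<circ> \<sigma>) i) * F ((\<alpha> \<circ> \<sigma>)(i := k))) = (\<Sum>i\<in>{s..m}. c (\<alpha> (\<sigma> i)) * F ((\<alpha>(\<sigma> i:=k)) \<circ> \<sigma>))"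
    proof (rule sum.cong[OF refl])
      fix i
      have "(\<alpha> \<circ> \<sigma>)(i := k) = (\<alpha>(\<sigma> i:=k)) \<circ> \<sigma>"
        using permutes_inj[OF sp] by (auto simp: fun_eq_iff inj_eq)
      thus "c ((\<alpha> \<circ> \<sigma>) i) * F ((\<alpha> \<circ> \<sigma>)(i := k)) = c (\<alpha> (\<sigma> i)) * F ((\<alpha>(\<sigma> i:=k)) \<circ> \<sigma>)" by simp
    qed
    also have "\<dots> = (\<Sum>i\<in>{s..m}. c (\<alpha> i) * F ((\<alpha>(i:=k)) \<circ> \<sigma>))"
      using sum.reindex_bij_betw[OF permutes_imp_bij[OF sp], of "\<lambda>i. c (\<alpha> i) * F ((\<alpha>(i:=k)) \<circ> \<sigma>)"] by simp
    finally show "of_int (sign \<sigma>) * (\<Sum>i\<in>{s..m}. c ((\<alpha> \<circ> \<sigma>) i) * F ((\<alpha> \<circ> \<sigma>)(i := k))) =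
        of_int (sign \<sigma>) * (\<Sum>i\<in>{s..m}. c (\<alpha> i) * F ((\<alpha>(i:=k)) \<circ> \<sigma>))" by simp
  qed
  also have "\<dots> = (\<Sum>i\<in>{s..m}. c (\<alpha> i) * Alt s m F (\<alpha>(i:=k)))"
    unfolding Alt_def sum_distrib_left
    by (subst sum.swap) (simp add: of_int_left_commute)
  finally show ?thesis .
qed

context core begin

lemma Alt_sm: "Alt s m (\<lambda>\<beta>. sm c (F \<beta>)) \<alpha> = sm c (Alt s m F \<alpha>)"
  unfolding Alt_def by (simp add: sm_simps)

lemma Alt_inv_zero:
  fixes F :: "(nat \<Rightarrow> nat) \<Rightarrow> 'S"
  assumes "i \<in> {s..m}" "j \<in> {s..m}" "i \<noteq> j" "\<And>\<beta>. F (\<beta> \<circ> Transposition.transpose i j) = F \<beta>"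
  shows "Alt s m F \<alpha> = 0"
proof -
  have "Alt s m F \<alpha> + Alt s m F \<alpha> = 0"
    unfolding Alt_right[OF assms(1-3)] by (simp add: assms(4) o_assoc)
  thus ?thesis by (rule two_cancel)
qed

lemma L_empty: "L (Suc m) m \<alpha> b = 1"
  unfolding L_def Alt_def Pi_def by (simp add: permutes_empty)

lemma claim1:
  fixes J :: "nat set"
  assumes Y1: "sm da (Pkl*q' - q'*Pkl) = sm e (Ps*qk - qsl*Pkbs)"
    and Y2: "sm (da+e) (Pkl*N - N*Pkl) = sm e ((\<Sum>j\<in>J. Pj j * Nj j) - (\<Sum>r\<in>J. Nr r * Pr r))"
    and Y3: "sm (da+e) (Pkbs*N - N*Pkbs) = sm e ((\<Sum>j\<in>J. Pjbs j * Nj j) - (\<Sum>r\<in>J. Nrbs r * Pr r))"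
    and Y4: "\<And>j. sm da (Pj j*q' - q'*Pj j) = sm e (Ps*qj j - qsl*Pjbs j)"
  shows "sm da (sm (da+e) (Pkl*(q'*N) - (q'*N)*Pkl)) - sm (da+e) (sm e ((Ps*qk*N - qsl*N*Pkbs) + (\<Sum>j\<in>J. Pj j*(q'*Nj j)) - (\<Sum>r\<in>J. q'*Nr r*Pr r)))
     = sm e (sm e ((\<Sum>r\<in>J. (qsl*Nrbs r + q'*Nr r)*Pr r) - (\<Sum>j\<in>J. (Ps*qj j + Pj j*q')*Nj j)))"
proof -
  let ?L = "sm da (sm (da+e) (Pkl*(q'*N) - (q'*N)*Pkl)) - sm (da+e) (sm e ((Ps*qk*N - qsl*N*Pkbs) + (\<Sum>j\<in>J. Pj j*(q'*Nj j)) - (\<Sum>r\<in>J. q'*Nr r*Pr r)))"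
  let ?R = "sm e (sm e ((\<Sum>r\<in>J. (qsl*Nrbs r + q'*Nr r)*Pr r) - (\<Sum>j\<in>J. (Ps*qj j + Pj j*q')*Nj j)))"
  have "?L - ?R = sm (da+e) ((sm da (Pkl*q' - q'*Pkl) - sm e (Ps*qk - qsl*Pkbs)) * N)
     + sm da (q' * (sm (da+e) (Pkl*N - N*Pkl) - sm e ((\<Sum>j\<in>J. Pj j * Nj j) - (\<Sum>r\<in>J. Nr r * Pr r))))
     - sm e (qsl * (sm (da+e) (Pkbs*N - N*Pkbs) - sm e ((\<Sum>j\<in>J. Pjbs j * Nj j) - (\<Sum>r\<in>J. Nrbs r * Pr r))))
     - sm e (\<Sum>j\<in>J. (sm da (Pj j*q' - q'*Pj j) - sm e (Ps*qj j - qsl*Pjbs j)) * Nj j)"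
    by (simp add: sm_simps algebra_simps sum_distrib_left sum_distrib_right sum_subtractf sum.distrib)
  also have "\<dots> = 0" using Y1 Y2 Y3 Y4 by simp
  finally show ?thesis by simp
qed

lemma MF:
  assumes "1 \<le> s" "s \<le> Suc m"
  shows "sm (D (int s - 1)) (P k l * L s m \<alpha> b - L s m \<alpha> b * P k l) =
    sm e ((\<Sum>i\<in>{s..m}. P (\<alpha> i) l * L s m (\<alpha>(i:=k)) b) - (\<Sum>r\<in>{s..m}. L s m \<alpha> (b(r:=l)) * P k (b r)))"
  using assms
proof (induction "Suc m - s" arbitrary: s k l \<alpha> b)
  case 0
  hence "s = Suc m" by simp
  thus ?case using L_empty by simp
next
  case (Suc dd)
  have sm: "s \<le> m" using Suc by simp
  have s1: "1 \<le> s" using Suc by simp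
  define d0 where "d0 = D (int s - 1)"
  have d1: "D (int s) = d0 + e" unfolding d0_def using D_succ[of "int s - 1"] by simp
  define q0 where "q0 = Q (s - 1)"
  define N where "N b \<beta> = L (Suc s) m \<beta> b" for b \<beta>
  define J where "J = {Suc s..m}"
  define G where "G b \<beta> = q0 (\<beta> s) (b s) * N b \<beta>" for b \<beta>
  define f where "f = (of_nat (fact (m - s)) :: 'S)"
  have IJ: "{s..m} = insert s J" "s \<notin> J" "finite J" unfolding J_def using sm by auto
  have IH: "sm (d0 + e) (P k' l' * N b' \<beta> - N b' \<beta> * P k' l') =
     sm e ((\<Sum>j\<in>J. P (\<beta> j) l' * N b' (\<beta>(j:=k'))) - (\<Sum>r\<in>J. N (b'(r:=l')) \<beta> * P k' (b' r)))" for k' l' \<beta> b'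
    using Suc.hyps(1)[of "Suc s" k' l' \<beta> b'] Suc.hyps(2) sm unfolding d1[symmetric] N_def J_def by simp
  have rA: "sm d0 (P i j * q0 i' j' - q0 i' j' * P i j) = sm e (P i' j * q0 i j' - q0 i' j * P i j')" for i j i' j'
    using relA[of "s - 1" i j i' j'] s1 unfolding d0_def q0_def by (simp add: of_nat_diff)
  have Ncong: "N b' \<beta>' = N b \<beta>" if "\<And>i. i \<in> J \<Longrightarrow> b' i = b i" "\<And>i. i \<in> J \<Longrightarrow> \<beta>' i = \<beta> i" for b b' \<beta> \<beta>'
    unfolding N_def using that unfolding J_def by (intro L_cong) auto
  have dec: "Alt s m (G b') \<beta> = f * L s m \<beta> b'" for b' \<beta>
    unfolding G_def N_def q0_def f_def using L_dec[OF sm, of \<beta> b'] by simp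
  define FT where "FT \<beta> = (\<Sum>i\<in>{s..m}. P (\<beta> i) l * G b (\<beta>(i:=k))) - (\<Sum>r\<in>{s..m}. G (b(r:=l)) \<beta> * P k (b r))" for \<beta>
  define U where "U j \<beta> = (P (\<beta> s) l * q0 (\<beta> j) (b s) + P (\<beta> j) l * q0 (\<beta> s) (b s)) * N b (\<beta>(j:=k))" for j \<beta>
  define V where "V r \<beta> = (q0 (\<beta> s) l * N (b(r:=b s)) \<beta> + q0 (\<beta> s) (b s) * N (b(r:=l)) \<beta>) * P k (b r)" for r \<beta>
  define E where "E \<beta> = sm d0 (sm (d0+e) (P k l * G b \<beta> - G b \<beta> * P k l)) - sm (d0+e) (sm e (FT \<beta>))" for \<beta>
  have FT: "FT \<beta> = (P (\<beta> s) l * q0 k (b s) * N b \<beta> - q0 (\<beta> s) l * N b \<beta> * P k (b s))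
      + (\<Sum>j\<in>J. P (\<beta> j) l * (q0 (\<beta> s) (b s) * N b (\<beta>(j:=k)))) - (\<Sum>r\<in>J. q0 (\<beta> s) (b s) * N (b(r:=l)) \<beta> * P k (b r))" for \<beta>
  proof -
    have a: "G b (\<beta>(s:=k)) = q0 k (b s) * N b \<beta>" unfolding G_def using IJ(2) by (simp, intro arg_cong[where f = "(*) _"] Ncong) auto
    have b: "G (b(s:=l)) \<beta> = q0 (\<beta> s) l * N b \<beta>" unfolding G_def using IJ(2) by (simp, intro arg_cong[where f = "(*) _"] Ncong) auto
    have c: "(\<Sum>j\<in>J. P (\<beta> j) l * G b (\<beta>(j:=k))) = (\<Sum>j\<in>J. P (\<beta> j) l * (q0 (\<beta> s) (b s) * N b (\<beta>(j:=k))))"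
      by (rule sum.cong[OF refl]) (use IJ(2) in \<open>auto simp: G_def\<close>)
    have d: "(\<Sum>r\<in>J. G (b(r:=l)) \<beta> * P k (b r)) = (\<Sum>r\<in>J. q0 (\<beta> s) (b s) * N (b(r:=l)) \<beta> * P k (b r))"
      by (rule sum.cong[OF refl]) (use IJ(2) in \<open>auto simp: G_def\<close>)
    show ?thesis unfolding FT_def IJ(1) sum.insert[OF IJ(3) IJ(2)] a b c d by (simp add: algebra_simps)
  qed
  have E: "E \<beta> = sm e (sm e ((\<Sum>r\<in>J. V r \<beta>) - (\<Sum>j\<in>J. U j \<beta>)))" for \<beta>
    unfolding E_def FT G_def U_def V_def
    by (rule claim1[where da=d0 and Pkl="P k l" and q'="q0 (\<beta> s) (b s)" and Ps="P (\<beta> s) l" and qk="q0 k (b s)"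
      and qsl="q0 (\<beta> s) l" and Pkbs="P k (b s)" and N="N b \<beta>" and J=J and Pj="\<lambda>j. P (\<beta> j) l"
      and Nj="\<lambda>j. N b (\<beta>(j:=k))" and Nr="\<lambda>r. N (b(r:=l)) \<beta>" and Pr="\<lambda>r. P k (b r)"
      and Pjbs="\<lambda>j. P (\<beta> j) (b s)" and Nrbs="\<lambda>r. N (b(r:=b s)) \<beta>" and qj="\<lambda>j. q0 (\<beta> j) (b s)"])
       (rule rA, rule IH, rule IH, rule rA)
  have sJ: "s \<in> {s..m}" using sm by simp
  have JI: "j \<in> J \<Longrightarrow> j \<in> {s..m} \<and> s \<noteq> j" for j unfolding J_def by auto
  have U0: "Alt s m (U j) \<alpha> = 0" if "j \<in> J" for j
  proof (rule Alt_inv_zero[OF sJ])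
    show "j \<in> {s..m}" "s \<noteq> j" using JI[OF that] by auto
    fix \<beta>
    let ?t = "Transposition.transpose s j"
    have "N b ((\<beta> \<circ> ?t)(j:=k)) = N b (\<beta>(j:=k))"
      by (rule Ncong) (use IJ(2) in \<open>auto simp: transpose_def\<close>)
    thus "U j (\<beta> \<circ> ?t) = U j \<beta>" unfolding U_def using JI[OF that] by (simp add: add.commute)
  qed
  have V0: "Alt s m (V r) \<alpha> = 0" if "r \<in> J" for r
  proof -
    define c where "c = b(r:=l)"
    let ?t = "Transposition.transpose s r"
    have rs: "r \<noteq> s" "s < r" "r \<le> m" using that unfolding J_def by auto
    have Vr: "V r = (\<lambda>\<beta>. (G (c \<circ> ?t) \<beta> + G c \<beta>) * P k (b r))"
    proof (rule ext)
      fix \<beta>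
      have "N (c \<circ> ?t) \<beta> = N (b(r:=b s)) \<beta>"
        by (rule Ncong) (use IJ(2) rs in \<open>auto simp: transpose_def c_def\<close>)
      thus "V r \<beta> = (G (c \<circ> ?t) \<beta> + G c \<beta>) * P k (b r)" unfolding V_def G_def c_def using rs by simp
    qed
    have "Alt s m (V r) \<alpha> = (Alt s m (G (c \<circ> ?t)) \<alpha> + Alt s m (G c) \<alpha>) * P k (b r)"
      unfolding Vr Alt_mult_right Alt_add ..
    also have "\<dots> = 0" unfolding dec L_col_transp[OF s1 order.refl rs(2,3)] by simp
    finally show ?thesis .
  qed
  have AE0: "Alt s m E \<alpha> = 0"
    unfolding E Alt_sm Alt_diff Alt_sum using U0 V0 by simp
  have AFT: "Alt s m FT \<alpha> = (\<Sum>i\<in>{s..m}. P (\<alpha> i) l * (f * L s m (\<alpha>(i:=k)) b)) - (\<Sum>r\<in>{s..m}. (f * L s m \<alpha> (b(r:=l))) * P k (b r))"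
    unfolding FT_def Alt_diff unfolding Alt_upd[of s m "\<lambda>x. P x l" "G b" k \<alpha>] unfolding Alt_sum Alt_mult_right dec ..
  have fl: "x * (f * y) = f * (x * y)" for x y unfolding f_def by (metis mult.assoc mult_of_nat_commute)
  define Z where "Z = sm d0 (P k l * L s m \<alpha> b - L s m \<alpha> b * P k l) -
    sm e ((\<Sum>i\<in>{s..m}. P (\<alpha> i) l * L s m (\<alpha>(i:=k)) b) - (\<Sum>r\<in>{s..m}. L s m \<alpha> (b(r:=l)) * P k (b r)))"
  have "Alt s m E \<alpha> = f * sm (d0 + e) Z"
    unfolding E_def Alt_diff Alt_sm Alt_mult_left Alt_mult_right AFT dec Z_def
    by (simp add: sm_simps algebra_simps sum_distrib_left fl)
  hence "f * sm (d0 + e) Z = 0" using AE0 by simp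
  hence "sm (d0 + e) Z = 0" using nat_cancel[of "fact (m - s)"] unfolding f_def by simp
  hence "Z = 0" using D_cancel[of "int s"] unfolding d1 by simp
  thus ?case unfolding Z_def d0_def by simp
qed


theorem core_main:
  assumes "p \<in> {1..m}" "q \<in> {1..m}"
  shows "P (a p) (b q) * L 1 m a b = L 1 m a b * P (a p) (b q)"
proof -
  let ?k = "a p" and ?l = "b q"
  have m: "1 \<le> Suc m" by simp
  have S1: "(\<Sum>i\<in>{1..m}. P (a i) ?l * L 1 m (a(i:=?k)) b) = P ?k ?l * L 1 m a b"
  proof -
    have "(\<Sum>i\<in>{1..m}. P (a i) ?l * L 1 m (a(i:=?k)) b) = (\<Sum>i\<in>{1..m}. if i = p then P ?k ?l * L 1 m a b else 0)"
    proof (rule sum.cong[OF refl])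
      fix i assume i: "i \<in> {1..m}"
      show "P (a i) ?l * L 1 m (a(i:=?k)) b = (if i = p then P ?k ?l * L 1 m a b else 0)"
      proof (cases "i = p")
        case False
        have "L 1 m (a(i:=?k)) b = 0" by (rule L_row_rep[OF i assms(1) False]) simp
        thus ?thesis using False by simp
      qed simp
    qed
    also have "\<dots> = P ?k ?l * L 1 m a b" using assms(1) by simp
    finally show ?thesis .
  qed
  have S2: "(\<Sum>r\<in>{1..m}. L 1 m a (b(r:=?l)) * P ?k (b r)) = L 1 m a b * P ?k ?l"
  proof -
    have "(\<Sum>r\<in>{1..m}. L 1 m a (b(r:=?l)) * P ?k (b r)) = (\<Sum>r\<in>{1..m}. if r = q then L 1 m a b * P ?k ?l else 0)"
    proof (rule sum.cong[OF refl])
      fix r assume r: "r \<in> {1..m}"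
      show "L 1 m a (b(r:=?l)) * P ?k (b r) = (if r = q then L 1 m a b * P ?k ?l else 0)"
      proof (cases "r = q")
        case False
        have "L 1 m a (b(r:=?l)) = 0" by (rule L_col_rep[OF order.refl r assms(2) False]) simp
        thus ?thesis using False by simp
      qed simp
    qed
    also have "\<dots> = L 1 m a b * P ?k ?l" using assms(2) by simp
    finally show ?thesis .
  qed
  have "sm (D 0) (P ?k ?l * L 1 m a b - L 1 m a b * P ?k ?l) = sm e (P ?k ?l * L 1 m a b - L 1 m a b * P ?k ?l)"
    using MF[OF order.refl m, of ?k ?l a b] unfolding S1 S2 by simp
  moreover have "D 0 = D (-1) + e" using D_succ[of "-1"] by simp
  ultimately have "sm (D (-1)) (P ?k ?l * L 1 m a b - L 1 m a b * P ?k ?l) = 0"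
    by (simp add: sm_add_left)
  hence "P ?k ?l * L 1 m a b - L 1 m a b * P ?k ?l = 0" by (rule D_cancel)
  thus ?thesis by simp
qed

end

locale rhom =
  fixes h :: "'a::ring_1 \<Rightarrow> 'b::ring_1"
  assumes h_add: "h (x + y) = h x + h y" and h_mult: "h (x * y) = h x * h y" and h_one: "h 1 = 1"
begin
lemma h_zero[simp]: "h 0 = 0" using h_add[of 0 0] by simp
lemma h_minus: "h (- x) = - h x" using h_add[of x "- x"] by (simp add: eq_neg_iff_add_eq_0 add.commute)
lemma h_diff: "h (x - y) = h x - h y" using h_add[of x "- y"] h_minus[of y] by simp
lemma h_sum: "h (sum f A) = (\<Sum>i\<in>A. h (f i))"
  by (induction A rule: infinite_finite_induct) (simp_all add: h_add)
lemma h_of_nat: "h (of_nat n) = of_nat n"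
  by (induction n) (simp_all add: h_add h_one)
lemma h_of_int: "h (of_int z) = of_int z"
  by (cases z rule: int_cases) (simp_all add: h_of_nat h_minus h_diff h_one)
lemma h_power: "h (x ^ n) = h x ^ n"
  by (induction n) (simp_all add: h_mult h_one)
lemma h_prod_list: "h (prod_list xs) = prod_list (map h xs)"
  by (induction xs) (simp_all add: h_mult h_one)
lemmas h_simps = h_add h_mult h_one h_minus h_diff h_sum h_of_nat h_of_int h_power
end

definition fmap :: "('a \<Rightarrow> 'b) \<Rightarrow> 'a fps \<Rightarrow> 'b fps" where
  "fmap h F = Abs_fps (\<lambda>n. h (F $ n))"

lemma fmap_nth[simp]: "fmap h F $ n = h (F $ n)"
  unfolding fmap_def by simp

lemma (in rhom) rhom_fmap: "rhom (fmap h)"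
proof
  show "fmap h (x + y) = fmap h x + fmap h y" for x y by (simp add: fps_eq_iff h_add)
  show "fmap h (x * y) = fmap h x * fmap h y" for x y by (simp add: fps_eq_iff fps_mult_nth h_sum h_mult)
  show "fmap h 1 = 1" by (simp add: fps_eq_iff h_one)
qed

lemma (in rhom) fmap_const: "fmap h (fps_const a) = fps_const (h a)"
  by (simp add: fps_eq_iff)

lemma (in rhom) fmap_X: "fmap h fps_X = fps_X"
  by (simp add: fps_eq_iff h_one)

lemma fps_central:
  fixes F :: "'a::ring_1 fps"
  assumes "\<And>i y. F $ i * y = y * F $ i"
  shows "F * G = G * F"
proof (rule fps_ext)
  fix n
  have "(G * F) $ n = (\<Sum>i=0..n. G $ (n + 0 - i) * F $ (n - (n + 0 - i)))"
    unfolding fps_mult_nth by (rule sum.atLeastAtMost_rev)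
  also have "\<dots> = (\<Sum>i=0..n. F $ i * G $ (n - i))"
    by (rule sum.cong[OF refl]) (auto simp: assms)
  finally show "(F * G) $ n = (G * F) $ n" by (simp add: fps_mult_nth)
qed

lemma conv_square:
  fixes f :: "nat \<Rightarrow> nat \<Rightarrow> 'a::comm_monoid_add"
  assumes "\<And>i j. N < i + j \<Longrightarrow> f i j = 0"
  shows "(\<Sum>s=0..N. \<Sum>i=0..s. f i (s - i)) = (\<Sum>i=0..N. \<Sum>j=0..N. f i j)"
proof -
  have "(\<Sum>i=0..N. \<Sum>j=0..N. f i j) = (\<Sum>(i,j)\<in>{0..N}\<times>{0..N}. f i j)"
    by (simp add: sum.cartesian_product)
  also have "\<dots> = (\<Sum>(i,j)\<in>{(i,j). i + j \<le> N}. f i j)"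
    by (rule sum.mono_neutral_right) (auto, metis assms not_le)
  also have "\<dots> = (\<Sum>k\<le>N. \<Sum>i\<le>k. f i (k - i))" by (rule sum.triangle_reindex_eq)
  finally show ?thesis by (simp add: atLeast0AtMost)
qed


definition fsubst :: "(complex \<Rightarrow> 'b::ring_1) \<Rightarrow> complex fps \<Rightarrow> 'b fps \<Rightarrow> 'b fps" where
  "fsubst em g F = Abs_fps (\<lambda>N. \<Sum>s=0..N. em ((g ^ s) $ N) * F $ s)"

lemma fsubst_nth: "fsubst em g F $ N = (\<Sum>s=0..N. em ((g ^ s) $ N) * F $ s)"
  unfolding fsubst_def by simp

locale subst_setup = rhom em for em :: "complex \<Rightarrow> 'b::ring_1" +
  fixes g :: "complex fps"
  assumes em_central: "em z * y = y * em z" and g0: "g $ 0 = 0"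
begin

lemma pow_zero: "N < s \<Longrightarrow> (g ^ s) $ N = 0"
  using startsby_zero_power_prefix[OF g0, of s] by simp

lemma fsubst_add: "fsubst em g (F + G) = fsubst em g F + fsubst em g G"
  by (simp add: fps_eq_iff fsubst_nth distrib_left sum.distrib)

lemma fsubst_one: "fsubst em g 1 = 1"
proof (rule fps_ext)
  fix N
  have "fsubst em g 1 $ N = (\<Sum>s\<in>{0}. em ((g ^ s) $ N) * (1::'b fps) $ s)"
    unfolding fsubst_nth by (rule sum.mono_neutral_right) auto
  thus "fsubst em g 1 $ N = (1::'b fps) $ N" by (simp add: h_one)
qed

lemma fsubst_mult: "fsubst em g (F * G) = fsubst em g F * fsubst em g G"
proof (rule fps_ext)
  fix N
  define c where "c p n = em ((g ^ p) $ n)" for p n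
  have c0: "n < p \<Longrightarrow> c p n = 0" for p n unfolding c_def using pow_zero by simp
  have cc: "c p n * y = y * c p n" for p n y unfolding c_def by (rule em_central)
  have "fsubst em g (F * G) $ N = (\<Sum>s=0..N. \<Sum>i=0..s. c s N * (F $ i * G $ (s - i)))"
    unfolding fsubst_nth fps_mult_nth c_def by (simp add: sum_distrib_left)
  also have "\<dots> = (\<Sum>s=0..N. \<Sum>i=0..s. c (i + (s - i)) N * (F $ i * G $ (s - i)))"
    by (intro sum.cong refl) auto
  also have "\<dots> = (\<Sum>p=0..N. \<Sum>q=0..N. c (p + q) N * (F $ p * G $ q))"
    by (rule conv_square) (simp add: c0)
  finally have L: "fsubst em g (F * G) $ N = (\<Sum>p=0..N. \<Sum>q=0..N. c (p + q) N * (F $ p * G $ q))" .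
  have ext1: "(\<Sum>p=0..k. c p k * F $ p) = (\<Sum>p=0..N. c p k * F $ p)" if "k \<le> N" for k
    by (rule sum.mono_neutral_left) (use that c0 in auto)
  have ext2: "(\<Sum>q=0..N-k. c q (N-k) * G $ q) = (\<Sum>q=0..N. c q (N-k) * G $ q)" for k
    by (rule sum.mono_neutral_left) (use c0 in auto)
  have "(fsubst em g F * fsubst em g G) $ N = (\<Sum>k=0..N. (\<Sum>p=0..k. c p k * F $ p) * (\<Sum>q=0..N-k. c q (N-k) * G $ q))"
    unfolding fps_mult_nth fsubst_nth c_def ..
  also have "\<dots> = (\<Sum>k=0..N. (\<Sum>p=0..N. c p k * F $ p) * (\<Sum>q=0..N. c q (N-k) * G $ q))"
    by (intro sum.cong refl) (simp add: ext1 ext2)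
  also have "\<dots> = (\<Sum>k=0..N. \<Sum>p=0..N. \<Sum>q=0..N. (c p k * c q (N-k)) * (F $ p * G $ q))"
  proof (intro sum.cong refl)
    fix k
    show "(\<Sum>p=0..N. c p k * F $ p) * (\<Sum>q=0..N. c q (N-k) * G $ q) = (\<Sum>p=0..N. \<Sum>q=0..N. (c p k * c q (N-k)) * (F $ p * G $ q))"
      unfolding sum_product
    proof (intro sum.cong refl)
      fix p q
      have "F $ p * (c q (N - k) * G $ q) = c q (N - k) * (F $ p * G $ q)"
        by (metis cc mult.assoc)
      thus "c p k * F $ p * (c q (N - k) * G $ q) = c p k * c q (N - k) * (F $ p * G $ q)"
        by (simp add: mult.assoc)
    qed
  qed
  also have "\<dots> = (\<Sum>p=0..N. \<Sum>q=0..N. \<Sum>k=0..N. (c p k * c q (N-k)) * (F $ p * G $ q))"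
    by (subst sum.swap) (rule sum.cong[OF refl], rule sum.swap)
  also have "\<dots> = (\<Sum>p=0..N. \<Sum>q=0..N. (\<Sum>k=0..N. c p k * c q (N-k)) * (F $ p * G $ q))"
    by (simp add: sum_distrib_right)
  also have "\<dots> = (\<Sum>p=0..N. \<Sum>q=0..N. c (p + q) N * (F $ p * G $ q))"
  proof (intro sum.cong refl)
    fix p q
    have "(\<Sum>k=0..N. c p k * c q (N-k)) = em ((g ^ p * g ^ q) $ N)"
      unfolding c_def fps_mult_nth h_sum h_mult ..
    thus "(\<Sum>k=0..N. c p k * c q (N-k)) * (F $ p * G $ q) = c (p + q) N * (F $ p * G $ q)"
      by (simp add: c_def power_add)
  qed
  finally show "fsubst em g (F * G) $ N = (fsubst em g F * fsubst em g G) $ N" using L by simp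
qed

lemma rhom_fsubst: "rhom (fsubst em g)"
  by standard (simp_all add: fsubst_add fsubst_mult fsubst_one)

lemma fsubst_const: "fsubst em g (fps_const b) = fps_const b"
proof (rule fps_ext)
  fix N
  have "fsubst em g (fps_const b) $ N = (\<Sum>s\<in>{0}. em ((g ^ s) $ N) * fps_const b $ s)"
    unfolding fsubst_nth by (rule sum.mono_neutral_right) auto
  thus "fsubst em g (fps_const b) $ N = fps_const b $ N" by (simp add: h_one)
qed

lemma fsubst_X: "fsubst em g fps_X = fmap em g"
proof (rule fps_ext)
  fix N
  show "fsubst em g fps_X $ N = fmap em g $ N"
  proof (cases "N = 0")
    case True thus ?thesis by (simp add: fsubst_nth g0)
  next
    case False
    have "fsubst em g fps_X $ N = (\<Sum>s\<in>{1}. em ((g ^ s) $ N) * fps_X $ s)"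
      unfolding fsubst_nth by (rule sum.mono_neutral_right) (use False in auto)
    thus ?thesis by simp
  qed
qed

end

lemma fsubst_natural:
  assumes "rhom h" "\<And>z. h (em z) = em' z"
  shows "fmap h (fsubst em g F) = fsubst em' g (fmap h F)"
  using assms by (simp add: fps_eq_iff fsubst_nth rhom.h_sum rhom.h_mult)



definition diag :: "'b::ring_1 fps fps \<Rightarrow> 'b fps" where
  "diag F = Abs_fps (\<lambda>n. \<Sum>i=0..n. (F $ i) $ (n - i))"

lemma diag_nth: "diag F $ n = (\<Sum>i=0..n. (F $ i) $ (n - i))"
  unfolding diag_def by simp

lemma diag_add: "diag (F + G) = diag F + diag G"
  by (simp add: fps_eq_iff diag_nth sum.distrib)

lemma diag_one: "diag 1 = 1"
proof (rule fps_ext)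
  fix n
  have "diag 1 $ n = (\<Sum>i\<in>{0}. ((1::'a::ring_1 fps fps) $ i) $ (n - i))"
    unfolding diag_nth by (rule sum.mono_neutral_right) auto
  thus "diag (1::'a fps fps) $ n = (1::'a fps) $ n" by simp
qed

lemma diag_mult: "diag (F * G) = diag F * diag G"
proof (rule fps_ext)
  fix n
  define f where "f a c = (if a + c \<le> n then (F $ a * G $ c) $ (n - (a + c)) else 0)" for a c
  define H where "H a b = (if a + b \<le> n then (\<Sum>c=0..n-(a+b). F $ a $ b * G $ c $ (n - (a + b) - c)) else 0)" for a b
  define K where "K a b c = (if a + b + c \<le> n then F $ a $ b * G $ c $ (n - a - b - c) else 0)" for a b c
  have "diag (F * G) $ n = (\<Sum>i=0..n. \<Sum>a=0..i. f a (i - a))"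
    unfolding diag_nth fps_mult_nth[of F G] fps_sum_nth f_def by (intro sum.cong refl) auto
  also have "\<dots> = (\<Sum>a=0..n. \<Sum>c=0..n. f a c)" by (rule conv_square) (simp add: f_def)
  also have "\<dots> = (\<Sum>a=0..n. \<Sum>c=0..n. \<Sum>b=0..n. K a b c)"
  proof (intro sum.cong refl)
    fix a c
    show "f a c = (\<Sum>b=0..n. K a b c)"
    proof (cases "a + c \<le> n")
      case True
      have "f a c = (\<Sum>b=0..n-(a+c). F $ a $ b * G $ c $ (n - (a + c) - b))"
        unfolding f_def fps_mult_nth using True by simp
      also have "\<dots> = (\<Sum>b=0..n-(a+c). K a b c)"
        unfolding K_def using True by (intro sum.cong refl) (auto simp: algebra_simps)
      also have "\<dots> = (\<Sum>b=0..n. K a b c)"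
        by (rule sum.mono_neutral_left) (auto simp: K_def)
      finally show ?thesis .
    qed (auto simp: f_def K_def)
  qed
  finally have L: "diag (F * G) $ n = (\<Sum>a=0..n. \<Sum>c=0..n. \<Sum>b=0..n. K a b c)" .
  have "(diag F * diag G) $ n = (\<Sum>k=0..n. (\<Sum>a=0..k. F $ a $ (k - a)) * (\<Sum>c=0..n-k. G $ c $ (n - k - c)))"
    unfolding fps_mult_nth[of "diag F" "diag G"] diag_nth ..
  also have "\<dots> = (\<Sum>k=0..n. \<Sum>a=0..k. H a (k - a))"
    unfolding sum_distrib_right
  proof (intro sum.cong refl)
    fix k a assume "k \<in> {0..n}" "a \<in> {0..k}"
    thus "F $ a $ (k - a) * (\<Sum>c=0..n - k. G $ c $ (n - k - c)) = H a (k - a)"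
      unfolding H_def by (simp add: sum_distrib_left)
  qed
  also have "\<dots> = (\<Sum>a=0..n. \<Sum>b=0..n. H a b)" by (rule conv_square) (simp add: H_def)
  also have "\<dots> = (\<Sum>a=0..n. \<Sum>b=0..n. \<Sum>c=0..n. K a b c)"
  proof (intro sum.cong refl)
    fix a b
    show "H a b = (\<Sum>c=0..n. K a b c)"
    proof (cases "a + b \<le> n")
      case True
      have "H a b = (\<Sum>c=0..n-(a+b). K a b c)"
        unfolding H_def K_def using True by (simp only: if_True, intro sum.cong refl) (auto simp: algebra_simps)
      also have "\<dots> = (\<Sum>c=0..n. K a b c)"
        by (rule sum.mono_neutral_left) (auto simp: K_def)
      finally show ?thesis .
    qed (auto simp: H_def K_def)
  qed
  also have "\<dots> = (\<Sum>a=0..n. \<Sum>c=0..n. \<Sum>b=0..n. K a b c)"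
    by (rule sum.cong[OF refl], rule sum.swap)
  finally show "diag (F * G) $ n = (diag F * diag G) $ n" using L by simp
qed

lemma rhom_diag: "rhom diag"
  by standard (simp_all add: diag_add diag_mult diag_one)

lemma diag_const: "diag (fps_const G) = G"
proof (rule fps_ext)
  fix n
  have "diag (fps_const G) $ n = (\<Sum>i\<in>{0}. (fps_const G $ i) $ (n - i))"
    unfolding diag_nth by (rule sum.mono_neutral_right) auto
  thus "diag (fps_const G) $ n = G $ n" by simp
qed

lemma diag_fmap_const: "diag (fmap fps_const G) = G"
proof (rule fps_ext)
  fix n
  have "diag (fmap fps_const G) $ n = (\<Sum>i\<in>{n}. (fmap fps_const G $ i) $ (n - i))"
    unfolding diag_nth by (rule sum.mono_neutral_right) auto
  thus "diag (fmap fps_const G) $ n = G $ n" by simp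
qed

lemma diag_X: "diag (fps_X :: 'b::ring_1 fps fps) = fps_X"
  using diag_fmap_const[of "fps_X :: 'b fps"] rhom.fmap_X[of fps_const]
  by (metis fps_const_add fps_const_mult fps_const_1_eq_1 rhom.intro)

lemma diag_natural: "rhom h \<Longrightarrow> diag (fmap (fmap h) F) = fmap h (diag F)"
  by (simp add: fps_eq_iff diag_nth rhom.h_sum)

function psi_rec :: "complex \<Rightarrow> complex \<Rightarrow> nat \<Rightarrow> complex" where
  "psi_rec \<beta> c N = (if N = 0 then 0 else
     (if N = 1 then 1 else 0) + \<beta> * (\<Sum>i\<in>{0..N-1}. psi_rec \<beta> c i * psi_rec \<beta> c (N - 1 - i))
     - c * psi_rec \<beta> c (N - 1) - (if 2 \<le> N then \<beta> * psi_rec \<beta> c (N - 2) else 0))"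
  by pat_completeness auto
termination by (relation "measure (\<lambda>(\<beta>, c, N). N)") auto

declare psi_rec.simps[simp del]

definition psi :: "complex \<Rightarrow> complex \<Rightarrow> complex fps" where
  "psi \<beta> c = Abs_fps (psi_rec \<beta> c)"

lemma psi_0: "psi \<beta> c $ 0 = 0"
  unfolding psi_def by (simp add: psi_rec.simps)

lemma psi_1: "psi \<beta> c $ 1 = 1"
  unfolding psi_def by (simp add: psi_rec.simps[of \<beta> c "Suc 0"] psi_rec.simps[of \<beta> c 0])

lemma psi_eq: "fps_X * (1 + fps_const \<beta> * psi \<beta> c ^ 2) =
    psi \<beta> c * (1 + fps_const c * fps_X + fps_const \<beta> * fps_X ^ 2)"
proof (rule fps_ext)
  fix N
  let ?p = "psi \<beta> c"
  have pn: "?p $ n = psi_rec \<beta> c n" for n unfolding psi_def by simp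
  show "(fps_X * (1 + fps_const \<beta> * ?p ^ 2)) $ N = (?p * (1 + fps_const c * fps_X + fps_const \<beta> * fps_X ^ 2)) $ N"
  proof (cases N)
    case 0 thus ?thesis by (simp add: psi_0)
  next
    case (Suc M)
    have l: "(fps_X * (1 + fps_const \<beta> * ?p ^ 2)) $ N = (if M = 0 then 1 else 0) + \<beta> * (\<Sum>i=0..M. ?p $ i * ?p $ (M - i))"
    proof -
      have "(fps_X * (1 + fps_const \<beta> * ?p ^ 2)) $ N = (1 + fps_const \<beta> * ?p ^ 2) $ M" using Suc by simp
      also have "\<dots> = (if M = 0 then 1 else 0) + \<beta> * (?p * ?p) $ M" by (simp add: power2_eq_square)
      finally show ?thesis by (simp add: fps_mult_nth[of ?p ?p])
    qed
    have r: "(?p * (1 + fps_const c * fps_X + fps_const \<beta> * fps_X ^ 2)) $ N = ?p $ N + c * ?p $ M + (if 1 \<le> M then \<beta> * ?p $ (M - 1) else 0)"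
    proof -
      have "?p * (1 + fps_const c * fps_X + fps_const \<beta> * fps_X ^ 2) = ?p + fps_const c * (fps_X * ?p) + fps_const \<beta> * (fps_X * (fps_X * ?p))"
        by (simp add: algebra_simps power2_eq_square)
      thus ?thesis using Suc by (simp add: fps_X_mult_nth)
    qed
    have "?p $ N = (if N = 1 then 1 else 0) + \<beta> * (\<Sum>i\<in>{0..N-1}. ?p $ i * ?p $ (N - 1 - i))
     - c * ?p $ (N - 1) - (if 2 \<le> N then \<beta> * ?p $ (N - 2) else 0)"
      unfolding pn using Suc by (subst psi_rec.simps) simp
    thus ?thesis unfolding l r using Suc by (auto simp: algebra_simps)
  qed
qed


lemma fls_X_times_X_inv: "fls_X * fls_X_inv = (1 :: complex fls)"
  using fls_inverse_X[where 'a=complex] by (metis fls_X_nonzero right_inverse)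

lemma fls_X_inv_times_X: "fls_X_inv * fls_X = (1 :: complex fls)"
  by (simp add: mult.commute fls_X_times_X_inv)

lemma phi_unique_aux:
  fixes \<phi>1 \<phi>2 :: "complex fls" and \<beta> c :: complex
  defines "w \<equiv> fls_X_inv + fls_const \<beta> * fls_X + fls_const c"
  assumes g1: "\<phi>1 = fls_X_inv + fps_to_fls g1" and e1: "\<phi>1 + fls_const \<beta> / \<phi>1 = w"
    and g2: "\<phi>2 = fls_X_inv + fps_to_fls g2" and e2: "\<phi>2 + fls_const \<beta> / \<phi>2 = w"
  shows "\<phi>1 = \<phi>2"
proof -
  have Xphi: "fls_X * (fls_X_inv + fps_to_fls g) = fps_to_fls (1 + fps_X * g)" for g :: "complex fps"
    by (simp add: distrib_left fls_X_times_X_inv fls_times_fps_to_fls)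
  have nz: "fls_X_inv + fps_to_fls g \<noteq> 0" for g :: "complex fps"
  proof
    assume "fls_X_inv + fps_to_fls g = 0"
    hence "fls_X * (fls_X_inv + fps_to_fls g) = 0" by simp
    hence "fps_to_fls (1 + fps_X * g) = 0" by (simp only: Xphi)
    hence "1 + fps_X * g = 0" by (simp only: fps_to_fls_eq_0_iff)
    hence "(1 + fps_X * g) $ 0 = 0" by simp
    thus False by simp
  qed
  have n1: "\<phi>1 \<noteq> 0" using g1 nz by simp
  have n2: "\<phi>2 \<noteq> 0" using g2 nz by simp
  have qq: "\<phi> * \<phi> - w * \<phi> + fls_const \<beta> = 0" if "\<phi> + fls_const \<beta> / \<phi> = w" "\<phi> \<noteq> 0" for \<phi>
  proof -
    have "(\<phi> + fls_const \<beta> / \<phi>) * \<phi> = \<phi> * \<phi> + fls_const \<beta>" using that(2) by (simp add: distrib_right)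
    hence "w * \<phi> = \<phi> * \<phi> + fls_const \<beta>" using that(1) by simp
    thus ?thesis by simp
  qed
  have q1: "\<phi>1 * \<phi>1 - w * \<phi>1 + fls_const \<beta> = 0" using qq e1 n1 by blast
  have q2: "\<phi>2 * \<phi>2 - w * \<phi>2 + fls_const \<beta> = 0" using qq e2 n2 by blast
  have "(\<phi>1 - \<phi>2) * (\<phi>1 + \<phi>2 - w) = (\<phi>1 * \<phi>1 - w * \<phi>1 + fls_const \<beta>) - (\<phi>2 * \<phi>2 - w * \<phi>2 + fls_const \<beta>)"
    by (simp add: algebra_simps)
  hence "(\<phi>1 - \<phi>2) * (\<phi>1 + \<phi>2 - w) = 0" using q1 q2 by simp
  moreover have "\<phi>1 + \<phi>2 \<noteq> w"
  proof
    assume h: "\<phi>1 + \<phi>2 = w"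
    have "\<phi>1 * \<phi>1 - w * \<phi>1 + fls_const \<beta> = fls_const \<beta> - \<phi>1 * \<phi>2"
      unfolding h[symmetric] by (simp add: algebra_simps)
    hence "fls_const \<beta> = \<phi>1 * \<phi>2" using q1 by simp
    hence "fls_X * fls_X * fls_const \<beta> = (fls_X * \<phi>1) * (fls_X * \<phi>2)" by (simp add: algebra_simps)
    hence "fps_to_fls (fps_X * fps_X * fps_const \<beta>) = fps_to_fls ((1 + fps_X * g1) * (1 + fps_X * g2))"
      unfolding g1 g2 Xphi by (simp add: fls_times_fps_to_fls)
    hence "(fps_X * fps_X * fps_const \<beta>) = ((1 + fps_X * g1) * (1 + fps_X * g2))" by simp
    hence "(fps_X * fps_X * fps_const \<beta>) $ 0 = ((1 + fps_X * g1) * (1 + fps_X * g2)) $ 0" by simp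
    thus False by simp
  qed
  ultimately show ?thesis by simp
qed

lemma phi_ser_psi: "phi_ser \<beta> c = inverse (fps_to_fls (psi \<beta> c))"
proof -
  let ?p = "psi \<beta> c"
  define u where "u = Abs_fps (\<lambda>n. ?p $ Suc n)"
  have pu: "?p = fps_X * u" unfolding u_def by (rule fps_ext) (simp add: psi_0)
  have u0: "u $ 0 = 1" unfolding u_def using psi_1 by simp
  define v where "v = inverse u"
  have uv: "u * v = 1" unfolding v_def using u0 inverse_mult_eq_1'[of u] by simp
  have v0: "v $ 0 = 1" unfolding v_def using u0 by simp
  define w' where "w' = Abs_fps (\<lambda>n. v $ Suc n)"
  have vw: "v = 1 + fps_X * w'" unfolding w'_def by (rule fps_ext) (simp add: v0)
  have "u + ?p * w' = 1" unfolding pu using uv vw by (simp add: algebra_simps)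
  have inv: "inverse (fps_to_fls ?p) = fls_X_inv + fps_to_fls w'"
  proof (rule inverse_unique)
    have "fps_to_fls ?p * fls_X_inv = fps_to_fls u"
      unfolding pu fls_times_fps_to_fls by (simp add: mult.commute[of fls_X] mult.assoc fls_X_times_X_inv fls_X_inv_times_X)
    hence "fps_to_fls ?p * (fls_X_inv + fps_to_fls w') = fps_to_fls (u + ?p * w')"
      by (simp add: distrib_left fls_times_fps_to_fls)
    also have "\<dots> = 1" using \<open>u + ?p * w' = 1\<close> by simp
    finally show "fps_to_fls ?p * (fls_X_inv + fps_to_fls w') = 1" .
  qed
  have E: "fls_X * (1 + fls_const \<beta> * fps_to_fls ?p ^ 2) =
      fps_to_fls ?p * (1 + fls_const c * fls_X + fls_const \<beta> * fls_X ^ 2)"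
    using arg_cong[OF psi_eq[of \<beta> c], of fps_to_fls] by (simp add: fls_times_fps_to_fls fps_to_fls_power)
  have pnz: "fps_to_fls ?p \<noteq> 0"
  proof
    assume "fps_to_fls ?p = 0" hence "?p = 0" by simp
    thus False using psi_1[of \<beta> c] by simp
  qed
  have P0: "inverse (fps_to_fls ?p) + fls_const \<beta> / inverse (fps_to_fls ?p) = fls_X_inv + fls_const \<beta> * fls_X + fls_const c"
  proof -
    define a where "a = fps_to_fls ?p"
    define X where "X = (fls_X :: complex fls)"
    have Xi: "fls_X_inv = inverse X" unfolding X_def by (simp add: fls_inverse_X)
    have anz: "a \<noteq> 0" using pnz unfolding a_def .
    have Xnz: "X \<noteq> 0" unfolding X_def by simp
    have ia: "inverse a * a = 1" "a * inverse a = 1" using anz by simp_all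
    have iX: "inverse X * X = 1" "X * inverse X = 1" using Xnz by simp_all
    have E': "X * (1 + fls_const \<beta> * a ^ 2) = a * (1 + fls_const c * X + fls_const \<beta> * X ^ 2)"
      using E unfolding a_def X_def .
    have l: "(inverse a + fls_const \<beta> * a) * (a * X) = X * (1 + fls_const \<beta> * a ^ 2)"
      by (simp add: algebra_simps power2_eq_square ia)
    have r: "(inverse X + fls_const \<beta> * X + fls_const c) * (a * X) = a * (1 + fls_const c * X + fls_const \<beta> * X ^ 2)"
      by (simp add: algebra_simps power2_eq_square iX)
    have "(inverse a + fls_const \<beta> * a) * (a * X) = (inverse X + fls_const \<beta> * X + fls_const c) * (a * X)"
      unfolding l r E' ..
    hence "inverse a + fls_const \<beta> * a = inverse X + fls_const \<beta> * X + fls_const c"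
      using anz Xnz by simp
    thus ?thesis unfolding a_def[symmetric] Xi X_def[symmetric] by (simp add: divide_inverse)
  qed
  show ?thesis unfolding phi_ser_def
  proof (rule the_equality)
    show "(\<exists>g. inverse (fps_to_fls ?p) = fls_X_inv + fps_to_fls g) \<and> inverse (fps_to_fls ?p) + fls_const \<beta> / inverse (fps_to_fls ?p) = fls_X_inv + fls_const \<beta> * fls_X + fls_const c"
      using inv P0 by blast
    fix \<phi> assume "(\<exists>g. \<phi> = fls_X_inv + fps_to_fls g) \<and> \<phi> + fls_const \<beta> / \<phi> = fls_X_inv + fls_const \<beta> * fls_X + fls_const c"
    then obtain g where g: "\<phi> = fls_X_inv + fps_to_fls g" and e: "\<phi> + fls_const \<beta> / \<phi> = fls_X_inv + fls_const \<beta> * fls_X + fls_const c" by blast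
    show "\<phi> = inverse (fps_to_fls ?p)"
      using phi_unique_aux[OF g e inv P0] .
  qed
qed

lemma fps_cancel0:
  fixes f F :: "'a::ring_1 fps"
  assumes c: "\<And>x. f $ 0 * x = 0 \<Longrightarrow> x = 0" and z: "f * F = 0"
  shows "F = 0"
proof -
  have "F $ n = 0" for n
  proof (induction n rule: less_induct)
    case (less n)
    have "(f * F) $ n = f $ 0 * F $ n + (\<Sum>i=1..n. f $ i * F $ (n - i))"
      unfolding fps_mult_nth by (simp add: sum.atLeast_Suc_atMost)
    also have "(\<Sum>i=1..n. f $ i * F $ (n - i)) = 0"
      by (rule sum.neutral) (auto simp: less)
    finally have "f $ 0 * F $ n = 0" using z by simp
    thus ?case by (rule c)
  qed
  thus ?thesis by (simp add: fps_eq_iff)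
qed

lemma fps_cancel1:
  fixes f F :: "'a::ring_1 fps"
  assumes f0: "f $ 0 = 0" and f1: "f $ 1 = 1" and z: "f * F = 0"
  shows "F = 0"
proof -
  define g where "g = Abs_fps (\<lambda>n. f $ Suc n)"
  have fg: "f = fps_X * g" unfolding g_def by (rule fps_ext) (simp add: f0)
  have xz: "fps_X * (g * F) = 0" using z unfolding fg by (simp add: mult.assoc)
  have "(g * F) $ k = 0" for k using arg_cong[OF xz, of "\<lambda>H. H $ Suc k"] by simp
  hence "g * F = 0" by (simp add: fps_eq_iff)
  moreover have "g $ 0 = 1" unfolding g_def using f1 by simp
  ultimately show ?thesis using fps_cancel0[of g F] by simp
qed


lemma PiE_sum_bound:
  assumes "i \<le> K"
  shows "{Ns \<in> {1..m} \<rightarrow>\<^sub>E {0..K}. sum Ns {1..m} = i} = {Ns \<in> {1..m} \<rightarrow>\<^sub>E {0..i}. sum Ns {1..(m::nat)} = (i::nat)}"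
proof (intro set_eqI iffI)
  fix Ns assume "Ns \<in> {Ns \<in> {1..m} \<rightarrow>\<^sub>E {0..K}. sum Ns {1..m} = i}"
  hence h: "Ns \<in> {1..m} \<rightarrow>\<^sub>E {0..K}" "sum Ns {1..m} = i" by auto
  have "Ns k \<le> i" if "k \<in> {1..m}" for k using member_le_sum[of k "{1..m}" Ns] that h(2) by simp
  thus "Ns \<in> {Ns \<in> {1..m} \<rightarrow>\<^sub>E {0..i}. sum Ns {1..m} = i}" using h by (auto simp: PiE_iff)
next
  fix Ns assume "Ns \<in> {Ns \<in> {1..m} \<rightarrow>\<^sub>E {0..i}. sum Ns {1..m} = i}"
  thus "Ns \<in> {Ns \<in> {1..m} \<rightarrow>\<^sub>E {0..K}. sum Ns {1..m} = i}" using assms by (auto simp: PiE_iff)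
qed

lemma prod_nth:
  fixes F :: "nat \<Rightarrow> 'a::ring_1 fps"
  shows "prod_list (map F [1..<Suc m]) $ N =
    (\<Sum>Ns \<in> {Ns \<in> {1..m} \<rightarrow>\<^sub>E {0..N}. sum Ns {1..m} = N}. prod_list (map (\<lambda>k. F k $ Ns k) [1..<Suc m]))"
proof (induction m arbitrary: N)
  case 0
  thus ?case by (cases N) auto
next
  case (Suc m)
  define G where "G m Ns = prod_list (map (\<lambda>k. F k $ Ns k) [1..<Suc m])" for m Ns
  define A where "A = prod_list (map F [1..<Suc m])"
  have fin: "finite ({1..m} \<rightarrow>\<^sub>E {0..N})" by (simp add: finite_PiE)
  have "prod_list (map F [1..<Suc (Suc m)]) $ N = (A * F (Suc m)) $ N" unfolding A_def by simp
  also have "\<dots> = (\<Sum>y=0..N. A $ (N + 0 - y) * F (Suc m) $ (N - (N + 0 - y)))"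
    unfolding fps_mult_nth by (rule sum.atLeastAtMost_rev)
  also have "\<dots> = (\<Sum>y=0..N. (\<Sum>g \<in> {Ns \<in> {1..m} \<rightarrow>\<^sub>E {0..N}. sum Ns {1..m} = N - y}. G m g) * F (Suc m) $ y)"
  proof (intro sum.cong refl)
    fix y assume y: "y \<in> {0..N}"
    have "A $ (N - y) = (\<Sum>g \<in> {Ns \<in> {1..m} \<rightarrow>\<^sub>E {0..N}. sum Ns {1..m} = N - y}. G m g)"
      unfolding A_def Suc.IH G_def using PiE_sum_bound[of "N - y" N m] by simp
    thus "A $ (N + 0 - y) * F (Suc m) $ (N - (N + 0 - y)) = (\<Sum>g \<in> {Ns \<in> {1..m} \<rightarrow>\<^sub>E {0..N}. sum Ns {1..m} = N - y}. G m g) * F (Suc m) $ y"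
      using y by simp
  qed
  also have "\<dots> = (\<Sum>y=0..N. \<Sum>g \<in> {1..m} \<rightarrow>\<^sub>E {0..N}. if sum g {1..m} = N - y then G m g * F (Suc m) $ y else 0)"
    unfolding sum_distrib_right sum.inter_filter[OF fin] by (intro sum.cong refl) simp
  also have "\<dots> = (\<Sum>(y, g) \<in> {0..N} \<times> ({1..m} \<rightarrow>\<^sub>E {0..N}).
       if sum (g(Suc m := y)) {1..Suc m} = N then G (Suc m) (g(Suc m := y)) else 0)"
    unfolding sum.cartesian_product[symmetric]
  proof (intro sum.cong refl)
    fix y g assume y: "y \<in> {0..N}" and g: "g \<in> {1..m} \<rightarrow>\<^sub>E {0..N}"
    have s: "sum (g(Suc m := y)) {1..Suc m} = sum g {1..m} + y"
    proof -
      have "sum (g(Suc m := y)) {1..Suc m} = sum (g(Suc m := y)) {1..m} + y" by simp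
      also have "sum (g(Suc m := y)) {1..m} = sum g {1..m}" by (rule sum.cong) auto
      finally show ?thesis .
    qed
    have gg: "G (Suc m) (g(Suc m := y)) = G m g * F (Suc m) $ y"
    proof -
      have e: "[1..<Suc (Suc m)] = [1..<Suc m] @ [Suc m]" by (rule upt_Suc_append) simp
      have "map (\<lambda>k. F k $ (g(Suc m := y)) k) [1..<Suc m] = map (\<lambda>k. F k $ g k) [1..<Suc m]"
        by (rule map_cong) auto
      note mm = this
      show ?thesis unfolding G_def e map_append prod_list.append mm by (simp del: upt_Suc)
    qed
    show "(if sum g {1..m} = N - y then G m g * F (Suc m) $ y else 0) =
        (if sum (g(Suc m := y)) {1..Suc m} = N then G (Suc m) (g(Suc m := y)) else 0)"
      unfolding s gg using y by auto
  qed
  also have "\<dots> = (\<Sum>Ns \<in> {1..Suc m} \<rightarrow>\<^sub>E {0..N}. if sum Ns {1..Suc m} = N then G (Suc m) Ns else 0)"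
  proof -
    have e: "{1..Suc m} = insert (Suc m) {1..m}" by auto
    show ?thesis unfolding e PiE_insert_eq
      by (subst sum.reindex[OF inj_combinator]) (simp_all add: split_def)
  qed
  also have "\<dots> = (\<Sum>Ns \<in> {Ns \<in> {1..Suc m} \<rightarrow>\<^sub>E {0..N}. sum Ns {1..Suc m} = N}. G (Suc m) Ns)"
    by (rule sum.inter_filter[symmetric]) (simp add: finite_PiE)
  finally show ?case unfolding G_def .
qed

locale oy =
  fixes sc :: "complex \<Rightarrow> 'A::ring_1" and t :: "nat \<Rightarrow> nat \<Rightarrow> nat \<Rightarrow> 'A"
    and \<beta> :: complex and n :: nat
  assumes calg: "is_calg sc" and rel: "OY_rel sc \<beta> n t"
begin

lemma sc_rhom: "rhom sc"
  using calg unfolding is_calg_def rhom_def by blast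

lemma sc_central: "sc z * y = y * sc z"
  using calg unfolding is_calg_def by blast

interpretation sc: rhom sc by (rule sc_rhom)

abbreviation "E1 \<equiv> fmap sc"
abbreviation "E2 \<equiv> fmap (fmap sc)"

lemma E1_rhom: "rhom E1" by (rule sc.rhom_fmap)
lemma E2_rhom: "rhom E2" by (rule rhom.rhom_fmap[OF E1_rhom])

interpretation E1: rhom E1 by (rule E1_rhom)
interpretation E2: rhom E2 by (rule E2_rhom)

lemma E1_central: "E1 k * y = y * E1 k"
  by (rule fps_central) (simp add: sc_central)

lemma E2_central: "E2 k * y = y * E2 k"
  by (rule fps_central) (simp add: E1_central)

definition emS :: "complex \<Rightarrow> 'A fps" where "emS z = fps_const (sc z)"

lemma emS_rhom: "rhom emS"
  unfolding emS_def by (intro rhom.intro) (simp_all add: sc.h_add sc.h_mult sc.h_one)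

lemma emS_central: "emS z * y = y * emS z"
  unfolding emS_def by (rule fps_central) (simp add: sc_central)


definition Tser :: "nat \<Rightarrow> nat \<Rightarrow> 'A fps" where
  "Tser i j = (if i \<in> {1..n} \<and> j \<in> {1..n} then Abs_fps (\<lambda>r. tt t r i j) else 0)"

definition Pin :: "nat \<Rightarrow> nat \<Rightarrow> 'A fps fps" where "Pin i j = fps_const (Tser i j)"
definition Rout :: "nat \<Rightarrow> nat \<Rightarrow> 'A fps fps" where "Rout i j = fmap fps_const (Tser i j)"

abbreviation XC :: "complex fps fps" where "XC \<equiv> fps_const fps_X"
abbreviation YC :: "complex fps fps" where "YC \<equiv> fps_X"
abbreviation BC :: "complex fps fps" where "BC \<equiv> fps_const (fps_const \<beta>)"

definition d0C :: "complex fps fps" where "d0C = (YC - XC) * (1 - BC * XC * YC)"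

lemma E2_XC: "E2 XC = fps_const fps_X" by (simp add: E1.fmap_const sc.fmap_X)
lemma E2_YC: "E2 YC = fps_X" by (rule E1.fmap_X)
lemma E2_BC: "E2 BC = fps_const (fps_const (sc \<beta>))" by (simp add: E1.fmap_const sc.fmap_const)

lemma tt0_comm: "tt t 0 k l * x = x * tt t 0 k l"
  by (simp add: tt_def)

lemma R0: "E2 d0C * (Pin i j * Rout k l - Rout k l * Pin i j) = E2 (XC * YC) * (Pin k j * Rout i l - Rout k j * Pin i l)"
proof (cases "i \<in> {1..n} \<and> j \<in> {1..n} \<and> k \<in> {1..n} \<and> l \<in> {1..n}")
  case False
  hence "Pin i j * Rout k l - Rout k l * Pin i j = 0 \<and> Pin k j * Rout i l - Rout k j * Pin i l = 0"
    unfolding Pin_def Rout_def Tser_def by (auto simp: fps_eq_iff)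
  thus ?thesis by simp
next
  case True
  define C where "C = Pin i j * Rout k l - Rout k l * Pin i j"
  define M where "M = Pin k j * Rout i l - Rout k j * Pin i l"
  have Tn: "Tser a b $ r = tt t r a b" if "a \<in> {1..n}" "b \<in> {1..n}" for a b r
    unfolding Tser_def using that by simp
  have Cn: "C $ s $ r = tt t r i j * tt t s k l - tt t s k l * tt t r i j" for s r
    unfolding C_def Pin_def Rout_def using True by (simp add: Tn)
  have Mn: "M $ s $ r = tt t r k j * tt t s i l - tt t s k j * tt t r i l" for s r
    unfolding M_def Pin_def Rout_def using True by (simp add: Tn)
  have d0: "d0C = YC - XC - BC * (XC * (YC * YC)) + BC * (XC * (XC * YC))"
    unfolding d0C_def by (simp add: algebra_simps)
  have L: "E2 d0C * C = fps_X * C - fps_const fps_X * C - fps_const (fps_const (sc \<beta>)) * (fps_const fps_X * (fps_X * (fps_X * C)))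
      + fps_const (fps_const (sc \<beta>)) * (fps_const fps_X * (fps_const fps_X * (fps_X * C)))"
    unfolding d0 by (simp only: E2.h_add E2.h_diff E2.h_mult E2_XC E2_YC E2_BC) (simp add: algebra_simps)
  have R: "E2 (XC * YC) * M = fps_const fps_X * (fps_X * M)"
    by (simp only: E2.h_mult E2_XC E2_YC mult.assoc)
  have "(E2 d0C * C) $ s $ r = (E2 (XC * YC) * M) $ s $ r" for s r
  proof (cases s)
    case 0
    thus ?thesis unfolding L R by (cases r) (simp_all add: Cn tt_def)
  next
    case (Suc s')
    show ?thesis
    proof (cases r)
      case 0
      thus ?thesis unfolding L R using Suc by (simp add: Cn tt_def)
    next
      case (Suc r')
      have oy: "comm (tt t (r' + 1) i j) (tt t s' k l)
       + (if r' \<ge> 1 then sc \<beta> * comm (tt t (r' - 1) i j) (tt t s' k l) else 0)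
       - comm (tt t r' i j) (tt t (s' + 1) k l)
       - (if s' \<ge> 1 then sc \<beta> * comm (tt t r' i j) (tt t (s' - 1) k l) else 0)
       = tt t r' k j * tt t s' i l - tt t s' k j * tt t r' i l"
        using rel True unfolding OY_rel_def by blast
      show ?thesis unfolding L R using Suc \<open>s = Suc s'\<close> oy
        by (cases r'; cases s') (simp_all add: Cn Mn comm_def algebra_simps)
    qed
  qed
  hence "E2 d0C * C = E2 (XC * YC) * M" by (simp add: fps_eq_iff)
  thus ?thesis unfolding C_def M_def .
qed


definition q :: "complex \<Rightarrow> nat \<Rightarrow> nat \<Rightarrow> 'A fps" where "q c i j = fsubst sc (psi \<beta> c) (Tser i j)"
definition Qs :: "complex \<Rightarrow> nat \<Rightarrow> nat \<Rightarrow> 'A fps fps" where "Qs c i j = fmap fps_const (q c i j)"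

definition PsiC :: "complex \<Rightarrow> complex fps fps" where "PsiC c = fmap fps_const (psi \<beta> c)"
definition DC :: "int \<Rightarrow> complex fps fps" where "DC z = d0C + of_int z * (XC * YC)"
abbreviation eC :: "complex fps fps" where "eC \<equiv> XC * YC"

lemma fpsc_rhom: "rhom (fps_const :: 'b::ring_1 \<Rightarrow> 'b fps)"
  by (intro rhom.intro) simp_all

lemma id_rhom: "rhom (\<lambda>z::complex. z)" by (intro rhom.intro) simp_all

lemma subst_S: "subst_setup emS (psi \<beta> c)"
  by (intro subst_setup.intro emS_rhom subst_setup_axioms.intro emS_central psi_0)

lemma subst_A: "subst_setup sc (psi \<beta> c)"
  by (intro subst_setup.intro sc_rhom subst_setup_axioms.intro sc_central psi_0)

lemma subst_C1: "subst_setup (\<lambda>z::complex. z) (psi \<beta> c)"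
  by (intro subst_setup.intro id_rhom subst_setup_axioms.intro psi_0) simp

lemma subst_C2: "subst_setup (fps_const :: complex \<Rightarrow> complex fps) (psi \<beta> c)"
  by (intro subst_setup.intro fpsc_rhom subst_setup_axioms.intro psi_0) (simp add: mult.commute)

lemma PsiC_eq: "YC * (1 + BC * PsiC c ^ 2) = PsiC c * (1 + fps_const (fps_const c) * YC + BC * YC ^ 2)"
proof -
  interpret h: rhom "fmap (fps_const :: complex \<Rightarrow> complex fps)" by (rule rhom.rhom_fmap[OF fpsc_rhom])
  have "fmap fps_const (fps_X * (1 + fps_const \<beta> * psi \<beta> c ^ 2)) =
    fmap fps_const (psi \<beta> c * (1 + fps_const c * fps_X + fps_const \<beta> * fps_X ^ 2))"
    using psi_eq by simp
  thus ?thesis unfolding PsiC_def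
    by (simp only: h.h_add h.h_mult h.h_power h.h_one rhom.fmap_X[OF fpsc_rhom] rhom.fmap_const[OF fpsc_rhom])
qed

lemma outer_identity:
  assumes "c = - of_int z"
  shows "YC * ((PsiC c - XC) * (1 - BC * XC * PsiC c)) = PsiC c * DC z"
proof -
  have cc: "fps_const (fps_const c) = - (of_int z :: complex fps fps)"
    unfolding assms by (simp add: fps_of_int[symmetric])
  have e: "YC * (1 + BC * PsiC c ^ 2) = PsiC c * (1 - of_int z * YC + BC * YC ^ 2)"
    using PsiC_eq[of c] unfolding cc by simp
  show ?thesis unfolding DC_def d0C_def using e by algebra
qed

lemma PhiOC_simps:
  "fsubst fps_const (psi \<beta> c) XC = XC"
  "fsubst fps_const (psi \<beta> c) YC = PsiC c"
  "fsubst fps_const (psi \<beta> c) BC = BC"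
  using subst_setup.fsubst_const[OF subst_C2] subst_setup.fsubst_X[OF subst_C2] unfolding PsiC_def by simp_all

lemma relA_S:
  assumes "c = - of_int z"
  shows "E2 (DC z) * (Pin i j * Qs c k l - Qs c k l * Pin i j) = E2 eC * (Pin k j * Qs c i l - Qs c k j * Pin i l)"
proof -
  let ?PO = "fsubst emS (psi \<beta> c)" and ?POC = "fsubst fps_const (psi \<beta> c)"
  interpret PO: rhom ?PO by (rule subst_setup.rhom_fsubst[OF subst_S])
  interpret POC: rhom ?POC by (rule subst_setup.rhom_fsubst[OF subst_C2])
  have Pc: "?PO (Pin a b) = Pin a b" for a b unfolding Pin_def by (rule subst_setup.fsubst_const[OF subst_S])
  have Qc: "?PO (Rout a b) = Qs c a b" for a b unfolding Rout_def Qs_def q_def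
    by (rule fsubst_natural[symmetric, OF fpsc_rhom]) (simp add: emS_def)
  have Ec: "?PO (E2 k) = E2 (?POC k)" for k
    by (rule fsubst_natural[symmetric, OF E1_rhom]) (simp add: emS_def sc.fmap_const)
  have "?PO (E2 d0C * (Pin i j * Rout k l - Rout k l * Pin i j)) = ?PO (E2 eC * (Pin k j * Rout i l - Rout k j * Pin i l))"
    using R0 by simp
  hence "E2 (?POC d0C) * (Pin i j * Qs c k l - Qs c k l * Pin i j) = E2 (?POC eC) * (Pin k j * Qs c i l - Qs c k j * Pin i l)"
    by (simp only: PO.h_mult PO.h_diff Pc Qc Ec)
  hence "E2 YC * (E2 (?POC d0C) * (Pin i j * Qs c k l - Qs c k l * Pin i j)) = E2 YC * (E2 (?POC eC) * (Pin k j * Qs c i l - Qs c k j * Pin i l))"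
    by simp
  hence "E2 (YC * ?POC d0C) * (Pin i j * Qs c k l - Qs c k l * Pin i j) = E2 (YC * ?POC eC) * (Pin k j * Qs c i l - Qs c k j * Pin i l)"
    by (simp only: E2.h_mult mult.assoc)
  moreover have "YC * ?POC d0C = PsiC c * DC z"
    unfolding d0C_def POC.h_mult POC.h_diff POC.h_one PhiOC_simps by (rule outer_identity[OF assms])
  moreover have "YC * ?POC eC = PsiC c * eC"
    unfolding POC.h_mult PhiOC_simps by (simp add: algebra_simps)
  ultimately have "E2 (PsiC c) * (E2 (DC z) * (Pin i j * Qs c k l - Qs c k l * Pin i j) - E2 eC * (Pin k j * Qs c i l - Qs c k j * Pin i l)) = 0"
    by (simp add: E2.h_mult mult.assoc right_diff_distrib)
  moreover have "E2 (PsiC c) $ 0 = 0" "E2 (PsiC c) $ 1 = 1"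
    unfolding PsiC_def using psi_0[of \<beta> c] psi_1[of \<beta> c] by (simp_all add: sc.fmap_const sc.h_one E1.h_one)
  ultimately show ?thesis using fps_cancel1 by fastforce
qed


lemma fmap_id: "fmap (\<lambda>z. z) F = F" by (simp add: fps_eq_iff)

lemma relB1:
  assumes c0: "c0 = - of_int z" and c1: "c1 = - of_int (z + 1)"
  shows "q c0 i j * q c1 k l - q c1 k l * q c0 i j = q c0 k j * q c1 i l - q c1 k j * q c0 i l"
proof -
  let ?PI = "fmap (fsubst sc (psi \<beta> c0))" and ?PIC = "fmap (fsubst (\<lambda>z. z) (psi \<beta> c0))"
  interpret PI: rhom ?PI by (rule rhom.rhom_fmap[OF subst_setup.rhom_fsubst[OF subst_A]])
  interpret PIC: rhom ?PIC by (rule rhom.rhom_fmap[OF subst_setup.rhom_fsubst[OF subst_C1]])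
  interpret Di: rhom "diag :: 'A fps fps \<Rightarrow> 'A fps" by (rule rhom_diag)
  interpret DiC: rhom "diag :: complex fps fps \<Rightarrow> complex fps" by (rule rhom_diag)
  have Pc: "?PI (Pin a b) = fps_const (q c0 a b)" for a b
    unfolding Pin_def q_def by (rule rhom.fmap_const[OF subst_setup.rhom_fsubst[OF subst_A]])
  have Qc: "?PI (Qs c1 a b) = Qs c1 a b" for a b
    unfolding Qs_def by (simp add: fps_eq_iff subst_setup.fsubst_const[OF subst_A])
  have Ec: "?PI (E2 k) = E2 (?PIC k)" for k
    by (simp add: fps_eq_iff fsubst_natural[OF sc_rhom, of "\<lambda>z. z" sc, symmetric])
  have DQ: "diag (Qs c1 a b) = q c1 a b" for a b unfolding Qs_def by (rule diag_fmap_const)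
  have DE: "diag (E2 k) = E1 (diag k)" for k by (rule diag_natural[OF sc_rhom])
  have "diag (?PI (E2 (DC (z + 1)) * (Pin i j * Qs c1 k l - Qs c1 k l * Pin i j))) =
        diag (?PI (E2 eC * (Pin k j * Qs c1 i l - Qs c1 k j * Pin i l)))"
    using relA_S[OF c1] by simp
  hence "E1 (diag (?PIC (DC (z + 1)))) * (q c0 i j * q c1 k l - q c1 k l * q c0 i j) =
         E1 (diag (?PIC eC)) * (q c0 k j * q c1 i l - q c1 k j * q c0 i l)"
    by (simp only: PI.h_mult PI.h_diff Pc Qc Ec Di.h_mult Di.h_diff diag_const DQ DE)
  moreover have pX: "?PIC XC = fps_const (psi \<beta> c0)"
    by (simp add: rhom.fmap_const[OF subst_setup.rhom_fsubst[OF subst_C1]] subst_setup.fsubst_X[OF subst_C1] fmap_id)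
  have pY: "?PIC YC = YC" by (rule rhom.fmap_X[OF subst_setup.rhom_fsubst[OF subst_C1]])
  have pB: "?PIC BC = BC"
    by (simp add: rhom.fmap_const[OF subst_setup.rhom_fsubst[OF subst_C1]] subst_setup.fsubst_const[OF subst_C1])
  have de: "diag (?PIC eC) = psi \<beta> c0 * fps_X"
    by (simp only: PIC.h_mult pX pY DiC.h_mult diag_const diag_X)
  have dd: "diag (?PIC (DC (z + 1))) = psi \<beta> c0 * fps_X"
  proof -
    have "diag (?PIC (DC (z + 1))) = (fps_X - psi \<beta> c0) * (1 - fps_const \<beta> * psi \<beta> c0 * fps_X) + of_int (z + 1) * (psi \<beta> c0 * fps_X)"
      unfolding DC_def d0C_def
      by (simp only: PIC.h_mult PIC.h_add PIC.h_diff PIC.h_one PIC.h_of_int pX pY pB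
          DiC.h_mult DiC.h_add DiC.h_diff DiC.h_one DiC.h_of_int diag_const diag_X)
    also have "\<dots> = psi \<beta> c0 * fps_X"
    proof -
      have cc: "fps_const c0 = - (of_int z :: complex fps)" unfolding c0 by (simp add: fps_of_int[symmetric])
      have e: "fps_X * (1 + fps_const \<beta> * psi \<beta> c0 ^ 2) = psi \<beta> c0 * (1 - of_int z * fps_X + fps_const \<beta> * fps_X ^ 2)"
        using psi_eq[of \<beta> c0] unfolding cc by simp
      show ?thesis unfolding of_int_add of_int_1 using e by algebra
    qed
    finally show ?thesis .
  qed
  ultimately have "E1 (psi \<beta> c0) * (fps_X * ((q c0 i j * q c1 k l - q c1 k l * q c0 i j) - (q c0 k j * q c1 i l - q c1 k j * q c0 i l))) = 0"
    unfolding de dd by (simp add: E1.h_mult sc.fmap_X mult.assoc right_diff_distrib)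
  moreover have "E1 (psi \<beta> c0) $ 0 = 0" "E1 (psi \<beta> c0) $ 1 = 1"
    using psi_0[of \<beta> c0] psi_1[of \<beta> c0] by (simp_all add: sc.h_one)
  ultimately have "fps_X * ((q c0 i j * q c1 k l - q c1 k l * q c0 i j) - (q c0 k j * q c1 i l - q c1 k j * q c0 i l)) = 0"
    using fps_cancel1 by blast
  moreover have X0: "(fps_X :: 'A fps) $ 0 = 0" "(fps_X :: 'A fps) $ 1 = 1" by simp_all
  ultimately have "(q c0 i j * q c1 k l - q c1 k l * q c0 i j) - (q c0 k j * q c1 i l - q c1 k j * q c0 i l) = 0"
    using fps_cancel1[OF X0] by blast
  thus ?thesis unfolding right_minus_eq .
qed


definition smS :: "complex fps fps \<Rightarrow> 'A fps fps \<Rightarrow> 'A fps fps" where "smS k x = E2 k * x"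
definition QQ :: "nat \<Rightarrow> nat \<Rightarrow> nat \<Rightarrow> 'A fps fps" where "QQ r i j = Qs (- of_nat r) i j"

lemma DC0: "DC z $ 0 = - fps_X"
  unfolding DC_def d0C_def by simp

lemma core_inst: "core Pin QQ smS DC eC"
proof unfold_locales
  fix c x y show "smS c x * y = smS c (x * y)" by (simp add: smS_def mult.assoc)
next
  fix x c y show "x * smS c y = smS c (x * y)" unfolding smS_def by (metis E2_central mult.assoc)
next
  fix c c' x show "smS c (smS c' x) = smS (c * c') x" by (simp add: smS_def E2.h_mult mult.assoc)
next
  fix c x y show "smS c (x + y) = smS c x + smS c y" by (simp add: smS_def distrib_left)
next
  fix c c' x show "smS (c + c') x = smS c x + smS c' x" by (simp add: smS_def E2.h_add distrib_right)
next
  fix z show "DC (z + 1) = DC z + eC" unfolding DC_def by (simp add: algebra_simps)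
next
  fix r i j k l
  show "smS (DC (int r)) (Pin i j * QQ r k l - QQ r k l * Pin i j) = smS eC (Pin k j * QQ r i l - QQ r k j * Pin i l)"
    unfolding smS_def QQ_def by (rule relA_S) simp
next
  fix r i j k l
  interpret h: rhom "fmap (fps_const :: 'A \<Rightarrow> 'A fps)" by (rule rhom.rhom_fmap[OF fpsc_rhom])
  have "q (- of_nat r) i j * q (- of_nat (Suc r)) k l - q (- of_nat (Suc r)) k l * q (- of_nat r) i j =
        q (- of_nat r) k j * q (- of_nat (Suc r)) i l - q (- of_nat (Suc r)) k j * q (- of_nat r) i l"
    by (rule relB1[of _ "int r"]) simp_all
  hence "fmap fps_const (q (- of_nat r) i j * q (- of_nat (Suc r)) k l - q (- of_nat (Suc r)) k l * q (- of_nat r) i j) =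
        fmap fps_const (q (- of_nat r) k j * q (- of_nat (Suc r)) i l - q (- of_nat (Suc r)) k j * q (- of_nat r) i l)"
    by simp
  thus "QQ r i j * QQ (Suc r) k l - QQ (Suc r) k l * QQ r i j = QQ r k j * QQ (Suc r) i l - QQ (Suc r) k j * QQ r i l"
    unfolding QQ_def Qs_def h.h_diff h.h_mult .
next
  fix z x assume h: "smS (DC z) x = 0"
  show "x = 0"
  proof (rule fps_cancel0[of "E2 (DC z)"])
    show "E2 (DC z) * x = 0" using h unfolding smS_def .
    fix y assume "E2 (DC z) $ 0 * y = 0"
    hence "- (fps_X * y) = 0" by (simp add: DC0 E1.h_minus sc.fmap_X)
    hence "fps_X * y = 0" by simp
    moreover have "(fps_X :: 'A fps) $ 0 = 0" "(fps_X :: 'A fps) $ 1 = 1" by simp_all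
    ultimately show "y = 0" using fps_cancel1 by blast
  qed
next
  fix m :: nat and x :: "'A fps fps" assume m: "m > 0" and h: "of_nat m * x = 0"
  have "E2 (fps_const (fps_const (inverse (of_nat m)))) * of_nat m = 1"
  proof -
    have "(of_nat m :: 'A fps fps) = E2 (of_nat m)" by (simp add: E2.h_of_nat)
    hence "E2 (fps_const (fps_const (inverse (of_nat m)))) * of_nat m = E2 (fps_const (fps_const (inverse (of_nat m))) * of_nat m)"
      by (simp add: E2.h_mult)
    also have "fps_const (fps_const (inverse (of_nat m))) * (of_nat m :: complex fps fps) = 1"
      using m by (simp add: fps_of_nat[symmetric])
    finally show ?thesis by (simp add: E2.h_one)
  qed
  hence "x = E2 (fps_const (fps_const (inverse (of_nat m)))) * (of_nat m * x)" by (simp add: mult.assoc[symmetric])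
  thus "x = 0" using h by simp
qed


lemma q_nth_Tphi:
  assumes "i \<in> {1..n}" "j \<in> {1..n}"
  shows "q c i j $ N = Tphi sc t \<beta> c N i j"
proof -
  have "inverse (phi_ser \<beta> c) = fps_to_fls (psi \<beta> c)" by (simp add: phi_ser_psi)
  hence f: "fls_nth (inverse (phi_ser \<beta> c) ^ r) (int N) = (psi \<beta> c ^ r) $ N" for r
    by (simp add: fps_to_fls_power[symmetric])
  show ?thesis unfolding q_def fsubst_nth Tphi_def f Tser_def using assms by simp
qed

lemma main_oy:
  assumes ab: "\<forall>k\<in>{1..m}. a k \<in> {1..n} \<and> b k \<in> {1..n}" and ij: "i \<in> {1..m}" "j \<in> {1..m}" and r: "1 \<le> r"
  shows "t r (a i) (b j) * qminor sc t \<beta> m a b N = qminor sc t \<beta> m a b N * t r (a i) (b j)"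
proof -
  interpret h: rhom "fmap (fps_const :: 'A \<Rightarrow> 'A fps)" by (rule rhom.rhom_fmap[OF fpsc_rhom])
  define F where "F \<sigma> k = q (- of_nat (k - 1)) (a (\<sigma> k)) (b k)" for \<sigma> :: "nat \<Rightarrow> nat" and k
  define Lq where "Lq = (\<Sum>\<sigma> | \<sigma> permutes {1..m}. of_int (sign \<sigma>) * prod_list (map (F \<sigma>) [1..<Suc m]))"
  have L: "core.L QQ 1 m a b = fmap fps_const Lq"
    unfolding core.L_def[OF core_inst] Alt_def core.Pi_def[OF core_inst] Lq_def h.h_sum h.h_mult h.h_of_int h.h_prod_list
    by (simp add: QQ_def Qs_def F_def o_def)
  have "Pin (a i) (b j) * fmap fps_const Lq = fmap fps_const Lq * Pin (a i) (b j)"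
    using core.core_main[OF core_inst ij, of a b] unfolding L .
  hence "(Pin (a i) (b j) * fmap fps_const Lq) $ N $ r = (fmap fps_const Lq * Pin (a i) (b j)) $ N $ r" by simp
  hence c1: "t r (a i) (b j) * Lq $ N = Lq $ N * t r (a i) (b j)"
    using ab ij r unfolding Pin_def Tser_def by (auto simp: tt_def)
  have qm: "qminor sc t \<beta> m a b N = sc (inverse (of_nat (fact m))) * Lq $ N"
  proof -
    have "Lq $ N = (\<Sum>\<sigma> | \<sigma> permutes {1..m}. of_int (sign \<sigma>) * prod_list (map (F \<sigma>) [1..<Suc m]) $ N)"
      unfolding Lq_def fps_sum_nth by (simp add: fps_of_int[symmetric])
    also have "\<dots> = (\<Sum>\<sigma> | \<sigma> permutes {1..m}. of_int (sign \<sigma>) *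
       (\<Sum>Ns \<in> {Ns \<in> {1..m} \<rightarrow>\<^sub>E {0..N}. sum Ns {1..m} = N}.
          prod_list (map (\<lambda>k. Tphi sc t \<beta> (- of_nat (k - 1)) (Ns k) (a (\<sigma> k)) (b k)) [1..<m+1])))"
    proof (intro sum.cong refl arg_cong[where f = "(*) _"])
      fix \<sigma> assume "\<sigma> \<in> {\<sigma>. \<sigma> permutes {1..m}}"
      hence s: "\<sigma> permutes {1..m}" by simp
      show "prod_list (map (F \<sigma>) [1..<Suc m]) $ N = (\<Sum>Ns \<in> {Ns \<in> {1..m} \<rightarrow>\<^sub>E {0..N}. sum Ns {1..m} = N}.
          prod_list (map (\<lambda>k. Tphi sc t \<beta> (- of_nat (k - 1)) (Ns k) (a (\<sigma> k)) (b k)) [1..<m+1]))"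
        unfolding prod_nth
      proof (intro sum.cong refl)
        fix Ns
        show "prod_list (map (\<lambda>k. F \<sigma> k $ Ns k) [1..<Suc m]) =
            prod_list (map (\<lambda>k. Tphi sc t \<beta> (- of_nat (k - 1)) (Ns k) (a (\<sigma> k)) (b k)) [1..<m+1])"
        proof (simp only: Suc_eq_plus1[symmetric], rule arg_cong[where f = prod_list], rule map_cong[OF refl])
          fix k assume "k \<in> set [1..<Suc m]"
          hence k: "k \<in> {1..m}" by auto
          hence "\<sigma> k \<in> {1..m}" using permutes_in_image[OF s] by simp
          thus "F \<sigma> k $ Ns k = Tphi sc t \<beta> (- of_nat (k - 1)) (Ns k) (a (\<sigma> k)) (b k)"
            unfolding F_def using ab k by (intro q_nth_Tphi) auto
        qed
      qed
    qed
    finally show ?thesis unfolding qminor_def by simp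
  qed
  show ?thesis unfolding qm
    by (metis c1 sc_central mult.assoc)
qed

end

theorem mainTheorem10:
  fixes sc :: "complex \<Rightarrow> 'A::ring_1"
    and t :: "nat \<Rightarrow> nat \<Rightarrow> nat \<Rightarrow> 'A"
    and \<beta> :: complex and n m :: nat and a b :: "nat \<Rightarrow> nat" and i j :: nat
  assumes "n \<ge> 1" and "\<beta> \<noteq> 0" and "1 \<le> m" and "m \<le> n"
    and "\<forall>k\<in>{1..m}. a k \<in> {1..n} \<and> b k \<in> {1..n}"
    and "is_calg sc" and "OY_rel sc \<beta> n t"
    and "i \<in> {1..m}" and "j \<in> {1..m}"
  shows "\<forall>r\<ge>1. \<forall>N. t r (a i) (b j) * qminor sc t \<beta> m a b N
                    = qminor sc t \<beta> m a b N * t r (a i) (b j)"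
proof (intro allI impI)
  fix r N :: nat assume r: "1 \<le> r"
  have o: "oy sc t \<beta> n" using assms(6,7) by (rule oy.intro)
  show "t r (a i) (b j) * qminor sc t \<beta> m a b N = qminor sc t \<beta> m a b N * t r (a i) (b j)"
    by (rule oy.main_oy[OF o assms(5) assms(8) assms(9) r])
qed

end
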